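(* Let $\mathcal{E}\subset\mathbf{P}^3$ be an elliptic quadric over $\mathbf{F}_q$, i.e. the surface with equation $x_0x_3-Q(x_1,x_2)=0$ for an irreducible quadratic form $Q\in\mathbf{F}_q[x,y]$. For every integer $s$ with $0\le s<q-1$, the evaluation code $C_{\mathcal{E}}(s)$ is permutation equivalent to the extended BCH code $B_0^{ext}(s)$; in particular $C_{\mathcal{E}}(s)$ has parameters $[q^2+1,(s+1)^2,q^2+1-s(q+1)]$.
   Context: For a smooth projective variety $X\subset\mathbf{P}^r$ over $\mathbf{F}_q$ and an integer $s\ge0$, the evaluation code $C_X(s)\subseteq\mathbf{F}_q^n$ is the image of the linear map sending a homogeneous polynomial $f\in\mathbf{F}_q[x_0,\dots,x_r]$ of degree $s$ to $(f(P_1),\dots,f(P_n))$, where $P_1,\dots,P_n$ are the $\mathbf{F}_q$-rational points of $X$ and $f(P)$ is evaluated at the representative of $P$ whose first nonzero coordinate from the left equals $1$. $B^{ext}(s)\subseteq\mathbf{F}_{q^2}^{q^2+1}$ is the $\mathbf{F}_{q^2}$-linear code spanned by the evaluations of the forms $x^{i+qj}y^{(s-i)+q(s-j)}$, $0\le i,j\le s$, at all points of $\mathbf{P}^1(\mathbf{F}_{q^2})$ (each point represented with first nonzero coordinate $1$); $B_0^{ext}(s)=B^{ext}(s)\cap\mathbf{F}_q^{q^2+1}$. Parameters $[n,k,d]$ denote length, dimension, minimum Hamming distance. *)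

theory Defs
  imports Main "HOL-Computational_Algebra.Polynomial" "HOL-Library.Function_Algebras"
begin

definition proj_points :: "nat \<Rightarrow> (nat \<Rightarrow> 'a::field) set" where
  "proj_points r = {x. (\<forall>i>r. x i = 0) \<and> (\<exists>i\<le>r. x i = 1 \<and> (\<forall>j<i. x j = 0))}"

section \<open>Codes: codewords are functions on an index set, zero outside it\<close>

definition res :: "'i set \<Rightarrow> ('i \<Rightarrow> 'a::zero) \<Rightarrow> 'i \<Rightarrow> 'a" where
  "res A f = (\<lambda>x. if x \<in> A then f x else 0)"

definition monomials :: "nat \<Rightarrow> nat \<Rightarrow> (nat \<Rightarrow> nat) set" where
  "monomials r s = {e. (\<forall>i>r. e i = 0) \<and> (\<Sum>i\<le>r. e i) = s}"

definition eval_code :: "nat \<Rightarrow> (nat \<Rightarrow> 'a::field) set \<Rightarrow> nat \<Rightarrow> ((nat \<Rightarrow> 'a) \<Rightarrow> 'a) set" where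
  "eval_code r X s =
     {res X (\<lambda>P. \<Sum>e\<in>monomials r s. a e * (\<Prod>i\<le>r. P i ^ e i)) | a. True}"

definition hweight :: "'i set \<Rightarrow> ('i \<Rightarrow> 'a::zero) \<Rightarrow> nat" where
  "hweight A c = card {x\<in>A. c x \<noteq> 0}"

definition min_dist :: "'i set \<Rightarrow> ('i \<Rightarrow> 'a::zero) set \<Rightarrow> nat" where
  "min_dist A C = Min {hweight A c | c. c \<in> C \<and> c \<noteq> (\<lambda>_. 0)}"

definition code_dim :: "('i \<Rightarrow> 'a::field) set \<Rightarrow> nat" where
  "code_dim C = vector_space.dim (\<lambda>(k::'a) (f::'i \<Rightarrow> 'a) x. k * f x) C"

definition perm_equiv :: "'i set \<Rightarrow> ('i \<Rightarrow> 'a::zero) set \<Rightarrow> 'j set \<Rightarrow> ('j \<Rightarrow> 'a) set \<Rightarrow> bool" where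
  "perm_equiv A C B D \<longleftrightarrow>
     (\<exists>\<sigma>. bij_betw \<sigma> A B \<and> C = (\<lambda>d. res A (d \<circ> \<sigma>)) ` D)"

text \<open>The binary quadratic form Q(x,y) = a x^2 + b x y + c y^2 as an element of F[x][y] = F[x,y]
  (outer variable y, inner variable x).\<close>
definition qform_poly :: "'a::field \<Rightarrow> 'a \<Rightarrow> 'a \<Rightarrow> 'a poly poly" where
  "qform_poly a b c = [: [:0, 0, a:], [:0, b:], [:c:] :]"

definition elliptic_quadric :: "'a::field \<Rightarrow> 'a \<Rightarrow> 'a \<Rightarrow> (nat \<Rightarrow> 'a) set" where
  "elliptic_quadric a b c =
     {P \<in> proj_points 3. P 0 * P 3 - (a * P 1 ^ 2 + b * P 1 * P 2 + c * P 2 ^ 2) = 0}"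

definition Bext :: "nat \<Rightarrow> nat \<Rightarrow> ((nat \<Rightarrow> 'b::field) \<Rightarrow> 'b) set" where
  "Bext q s =
     {res (proj_points 1)
        (\<lambda>P. \<Sum>(i,j)\<in>{0..s}\<times>{0..s}. \<alpha> (i,j) * (P 0 ^ (i + q*j) * P 1 ^ ((s-i) + q*(s-j)))) | \<alpha>. True}"

text \<open>B_0^ext(s) = B^ext(s) \<inter> F_q^(q^2+1), with F_q embedded in F_{q^2} via emb.\<close>
definition Bext0 :: "('a::field \<Rightarrow> 'b::field) \<Rightarrow> nat \<Rightarrow> nat \<Rightarrow> ((nat \<Rightarrow> 'b) \<Rightarrow> 'a) set" where
  "Bext0 emb q s =
     {c. (\<forall>P. P \<notin> proj_points 1 \<longrightarrow> c P = 0) \<and> (emb \<circ> c) \<in> Bext q s}"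

end

theory Submission
  imports Defs "HOL-Computational_Algebra.Primes" "HOL-Library.FuncSet"
begin


lemma ff_pow_card:
  fixes x :: "'c :: {field,finite}"
  shows "x ^ card (UNIV :: 'c set) = x"
proof (cases "x = 0")
  case False
  have "x * (\<Prod>y\<in>UNIV-{0}. x * y) = x * x ^ (card (UNIV :: 'c set) - 1) * \<Prod>(UNIV-{0})"
    by (simp add: prod.distrib mult_ac)
  also have "x * x ^ (card (UNIV :: 'c set) - 1) = x ^ Suc (card (UNIV :: 'c set) - 1)"
    by (subst power_Suc) auto
  also have "Suc (card (UNIV :: 'c set) - 1) = card (UNIV :: 'c set)"
    using finite_UNIV_card_ge_0[where ?'a = 'c] by simp
  also have "(\<Prod>y\<in>UNIV-{0}. x * y) = (\<Prod>y\<in>UNIV-{0}. y)"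
    by (rule prod.reindex_bij_witness[of _ "\<lambda>y. y / x" "\<lambda>y. x * y"]) (use False in auto)
  finally show ?thesis
    by simp
qed (use finite_UNIV_card_ge_0[where ?'a = 'c] in auto)

lemma card_field_ge2: "card (UNIV :: 'c :: {field,finite} set) \<ge> 2"
proof -
  have "{0, 1::'c} \<subseteq> UNIV" by simp
  hence "card {0,1::'c} \<le> card (UNIV :: 'c set)" by (intro card_mono) auto
  thus ?thesis by simp
qed

lemma binom_vanish:
  fixes dummy :: "'c :: {field,finite}"
  assumes "0 < k" "k < card (UNIV :: 'c set)"
  shows "of_nat (card (UNIV :: 'c set) choose k) = (0::'c)"
proof -
  define q where "q = card (UNIV :: 'c set)"
  have q2: "q \<ge> 2" unfolding q_def by (rule card_field_ge2)
  define p :: "'c poly" where "p = [:1,1:] ^ q - monom 1 q - 1"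
  have cp: "coeff p n = (if n \<le> q then of_nat (q choose n) else 0) - (if n = q then 1 else 0) - (if n = 0 then 1 else 0)" for n
    using q2 by (auto simp: p_def coeff_monom coeff_linear_poly_power coeff_eq_0 degree_linear_power)
  have roots: "poly p x = 0" for x
    unfolding p_def using ff_pow_card[of x] ff_pow_card[of "1+x"] by (simp add: q_def poly_monom)
  have "p = 0"
  proof (rule ccontr)
    assume "p \<noteq> 0"
    have "degree p \<le> q - 1"
      by (rule degree_le) (use q2 in \<open>auto simp: cp\<close>)
    moreover have "card {x. poly p x = 0} \<le> degree p" by (rule card_poly_roots_bound) fact
    moreover have "{x. poly p x = 0} = UNIV" using roots by auto
    ultimately show False using q2 unfolding q_def by auto
  qed
  hence "coeff p k = 0" by simp
  thus ?thesis using assms by (simp add: cp q_def)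
qed

lemma frob_add_base:
  fixes x y :: "'b :: field"
  assumes "\<And>k. 0 < k \<Longrightarrow> k < q \<Longrightarrow> of_nat (q choose k) = (0::'b)" "q > 0"
  shows "(x + y) ^ q = x ^ q + y ^ q"
proof -
  have "(x + y) ^ q = (\<Sum>k\<le>q. of_nat (q choose k) * x ^ k * y ^ (q - k))"
    by (rule binomial_ring)
  also have "\<dots> = (\<Sum>k\<in>{0,q}. of_nat (q choose k) * x ^ k * y ^ (q - k))"
    by (intro sum.mono_neutral_right) (use assms in auto)
  finally show ?thesis using assms by (simp add: add_ac)
qed


locale ell =
  fixes a b c :: "'a::{field,finite}" and emb :: "'a \<Rightarrow> 'b::{field,finite}" and q :: nat
  assumes q_def: "q = card (UNIV::'a set)"
  and Qirr: "irreducible (qform_poly a b c)"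
  and Fq2: "card (UNIV :: 'b set) = q ^ 2"
  and emb_add: "\<And>x y. emb (x + y) = emb x + emb y"
  and emb_mult: "\<And>x y. emb (x * y) = emb x * emb y"
  and emb_1: "emb 1 = 1"
begin

lemma emb_0[simp]: "emb 0 = 0"
proof -
  have "emb 0 + emb 0 = emb 0 + 0" using emb_add[of 0 0] by simp
  thus ?thesis by (rule add_left_imp_eq)
qed

lemma emb_neg: "emb (- x) = - emb x"
proof -
  have "emb x + emb (-x) = 0" using emb_add[of x "-x"] by simp
  thus ?thesis by (metis minus_unique)
qed

lemma emb_diff: "emb (x - y) = emb x - emb y"
  using emb_add[of x "-y"] by (simp add: emb_neg)

lemma emb_pow: "emb (x ^ n) = emb x ^ n"
  by (induction n) (simp_all add: emb_1 emb_mult)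

lemma emb_eq0[simp]: "emb x = 0 \<longleftrightarrow> x = 0"
proof
  assume h: "emb x = 0"
  show "x = 0"
  proof (rule ccontr)
    assume "x \<noteq> 0"
    hence "emb (x * inverse x) = 1" by (simp add: emb_1)
    thus False using h by (simp add: emb_mult)
  qed
qed simp

lemma emb_inj: "inj emb"
  by (rule injI) (metis emb_diff emb_eq0 eq_iff_diff_eq_0)

lemma emb_eq_iff[simp]: "emb x = emb y \<longleftrightarrow> x = y"
  using emb_inj by (auto dest: injD)

lemma emb_inverse: "emb (inverse x) = inverse (emb x)"
proof (cases "x = 0")
  case False
  hence "emb x * emb (inverse x) = 1" by (simp add: emb_1 flip: emb_mult)
  thus ?thesis by (metis inverse_unique)
qed simp

lemma emb_divide: "emb (x / y) = emb x / emb y"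
  by (simp add: divide_inverse emb_mult emb_inverse)

lemma emb_sum: "emb (sum f A) = (\<Sum>x\<in>A. emb (f x))"
  by (induction A rule: infinite_finite_induct) (simp_all add: emb_add)

lemma emb_prod: "emb (prod f A) = (\<Prod>x\<in>A. emb (f x))"
  by (induction A rule: infinite_finite_induct) (simp_all add: emb_mult emb_1)

lemma emb_of_nat: "emb (of_nat n) = of_nat n"
  by (induction n) (simp_all add: emb_add emb_1)

lemma q2: "q \<ge> 2"
  unfolding q_def by (rule card_field_ge2)

lemma emb_powq: "emb x ^ q = emb x"
  by (metis emb_pow ff_pow_card q_def)

lemma powq2: "(x::'b) ^ (q ^ 2) = x"
  using ff_pow_card[of x] Fq2 by simp

lemma powqq: "((x::'b) ^ q) ^ q = x"
  using powq2[of x] by (simp add: power2_eq_square power_mult)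

lemma frob_add: "((x::'b) + y) ^ q = x ^ q + y ^ q"
proof (rule frob_add_base)
  fix k assume "0 < k" "k < q"
  hence "of_nat (q choose k) = (0::'a)" using binom_vanish[of k] unfolding q_def by auto
  hence "emb (of_nat (q choose k)) = 0" by simp
  thus "of_nat (q choose k) = (0::'b)" by (simp add: emb_of_nat)
qed (use q2 in auto)

lemma frob_0[simp]: "(0::'b) ^ q = 0"
  using q2 by simp

lemma frob_neg: "(- (x::'b)) ^ q = - (x ^ q)"
proof -
  have "x ^ q + (-x) ^ q = 0" using frob_add[of x "-x"] by simp
  thus ?thesis by (metis minus_unique)
qed

lemma frob_diff: "((x::'b) - y) ^ q = x ^ q - y ^ q"
  using frob_add[of x "-y"] by (simp add: frob_neg)

lemma frob_sum: "(sum (f :: _ \<Rightarrow> 'b) A) ^ q = (\<Sum>x\<in>A. f x ^ q)"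
  by (induction A rule: infinite_finite_induct) (simp_all add: frob_add)

lemma frob_mult: "((x::'b) * y) ^ q = x ^ q * y ^ q"
  by (rule power_mult_distrib)

lemma frob_inverse: "(inverse (x::'b)) ^ q = inverse (x ^ q)"
  by (rule power_inverse)

lemma frob_pow: "((x::'b) ^ n) ^ q = (x ^ q) ^ n"
  by (simp add: power_mult[symmetric] mult.commute)

lemma frob_inj: "(x::'b) ^ q = y ^ q \<longleftrightarrow> x = y"
  by (metis powqq)

lemma coeff_X_q: "coeff [:0,1::'b:] q = 0"
  using q2 by (cases q; cases "q - 1") auto

lemma card_range_emb: "card (range emb) = q"
  using emb_inj by (simp add: card_image q_def)

lemma fixed_iff: "(t::'b) ^ q = t \<longleftrightarrow> t \<in> range emb"
proof
  assume ht: "t ^ q = t"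
  show "t \<in> range emb"
  proof (rule ccontr)
    assume nt: "t \<notin> range emb"
    define p :: "'b poly" where "p = monom 1 q - [:0,1:]"
    have cp: "coeff p q = 1" using q2 by (simp add: p_def coeff_monom coeff_X_q)
    hence p0: "p \<noteq> 0" by auto
    have dp: "degree p \<le> q"
      unfolding p_def by (rule degree_diff_le) (use q2 in \<open>auto simp: degree_monom_le\<close>)
    have "insert t (range emb) \<subseteq> {x. poly p x = 0}"
      using ht emb_powq by (auto simp: p_def poly_monom)
    hence "card (insert t (range emb)) \<le> card {x. poly p x = 0}"
      by (intro card_mono) (auto intro: poly_roots_finite p0)
    also have "\<dots> \<le> degree p" by (rule card_poly_roots_bound) fact
    finally show False using nt dp card_range_emb by simp
  qed
qed (auto simp: emb_powq)

lemma fixedI: "(t::'b) ^ q = t \<Longrightarrow> emb (inv emb t) = t"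
  using fixed_iff by (auto simp: f_inv_into_f)

lemma inv_emb_emb[simp]: "inv emb (emb x) = x"
  using emb_inj by simp

lemma exists_trace1: "\<exists>l::'b. l + l ^ q = 1"
proof -
  have "\<exists>w::'b. w + w ^ q \<noteq> 0"
  proof (rule ccontr)
    assume "\<not> ?thesis"
    hence all: "w + w ^ q = 0" for w :: 'b by auto
    define p :: "'b poly" where "p = monom 1 q + [:0,1:]"
    have cp: "coeff p q = 1" using q2 by (simp add: p_def coeff_monom coeff_X_q)
    hence p0: "p \<noteq> 0" by auto
    have dp: "degree p \<le> q"
      unfolding p_def by (rule degree_add_le) (use q2 in \<open>auto simp: degree_monom_le\<close>)
    have "UNIV \<subseteq> {x. poly p x = 0}"
      using all by (auto simp: p_def poly_monom add.commute)
    hence "card (UNIV::'b set) \<le> card {x. poly p x = 0}"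
      by (intro card_mono) (auto intro: poly_roots_finite p0)
    also have "\<dots> \<le> degree p" by (rule card_poly_roots_bound) fact
    finally have "q ^ 2 \<le> q" using dp Fq2 by simp
    thus False using q2 by (simp add: power2_eq_square)
  qed
  then obtain w :: 'b where w: "w + w ^ q \<noteq> 0" by blast
  define m where "m = w + w ^ q"
  have mq: "m ^ q = m" unfolding m_def by (simp add: frob_add powqq add.commute)
  have "(w / m) + (w / m) ^ q = 1"
    using w by (simp add: power_divide mq m_def[symmetric] field_simps)
  thus ?thesis by blast
qed

end


lemma card_le_fibers:
  assumes "finite A" "\<And>v. card {x\<in>A. f x = v} \<le> k"
  shows "card A \<le> k * card (f ` A)"
proof -
  have "A = (\<Union>v\<in>f ` A. {x\<in>A. f x = v})" by auto
  hence "card A = (\<Sum>v\<in>f ` A. card {x\<in>A. f x = v})"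
    using assms(1) by (subst card_UN_disjoint[symmetric]) auto
  also have "\<dots> \<le> (\<Sum>v\<in>f ` A. k)" by (rule sum_mono) (use assms in auto)
  finally show ?thesis by (simp add: mult.commute)
qed

lemma quad_roots_le2:
  fixes u v :: "'b :: field"
  shows "card {z. z * z - u * z + v = 0} \<le> 2"
proof -
  define p where "p = [:v, -u, 1:]"
  have "p \<noteq> 0" by (simp add: p_def)
  have "degree p = 2" by (simp add: p_def)
  have "{z. z * z - u * z + v = 0} = {z. poly p z = 0}"
    by (auto simp: p_def algebra_simps)
  thus ?thesis using card_poly_roots_bound[OF \<open>p \<noteq> 0\<close>] \<open>degree p = 2\<close> by simp
qed

context ell begin

lemma Q_facts: "a \<noteq> 0 \<and> (\<forall>r. a * r^2 + b * r + c \<noteq> 0)"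
proof -
  have irr: "\<And>x y. qform_poly a b c = x * y \<Longrightarrow> is_unit x \<or> is_unit y" and nz: "qform_poly a b c \<noteq> 0"
    using Qirr by (auto simp: irreducible_def)
  have nu1: "\<not> is_unit [: [:0,1:], [:r:] :]" for r :: 'a
    by (auto simp: is_unit_poly_iff)
  have a_nz: "a \<noteq> 0"
  proof
    assume a0: "a = 0"
    have eq: "qform_poly a b c = [:0,1:] * [: [:0,b:], [:c:] :]"
      by (simp add: qform_poly_def a0)
    have "\<not> is_unit [:0, 1 :: 'a poly:]" by (auto simp: is_unit_poly_iff)
    moreover have "\<not> is_unit [: [:0,b:], [:c:] :]"
    proof
      assume "is_unit [: [:0,b:], [:c:] :]"
      then obtain k where k: "[: [:0,b:], [:c:] :] = [:k:]" "is_unit k" by (auto simp: is_unit_poly_iff)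
      hence "c = 0" "k = [:0,b:]" by auto
      with k have "b = 0" by (auto simp: is_unit_poly_iff)
      with \<open>c = 0\<close> nz a0 show False by (simp add: qform_poly_def)
    qed
    ultimately show False using irr[OF eq] by blast
  qed
  have "a * r^2 + b * r + c \<noteq> 0" for r
  proof
    assume hr: "a * r^2 + b * r + c = 0"
    show False
    proof -
      note a0 = a_nz
      define r' where "r' = - b / a - r"
      have hb: "b = - a * r - a * r'" using a0 by (simp add: r'_def field_simps)
      have hc0: "c = - (b * r + a * r^2)" using hr by (metis add.commute add.left_commute eq_neg_iff_add_eq_0)
      have hc: "c = a * r * r'" using a0 by (simp add: hc0 r'_def field_simps power2_eq_square)
      have eq: "qform_poly a b c = [: [:0,1:], [:-r:] :] * [: [:0,a:], [:-a*r':] :]"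
        by (simp add: qform_poly_def hb hc algebra_simps)
      have "\<not> is_unit [: [:0,a:], [:-a*r':] :]"
        using a0 by (auto simp: is_unit_poly_iff)
      thus False using irr[OF eq] nu1 by blast
    qed
  qed
  thus ?thesis using a_nz by blast
qed

lemma a_nz: "a \<noteq> 0" using Q_facts by blast

lemma Q_noroot: "a * r^2 + b * r + c \<noteq> 0" using Q_facts by blast

lemma sq_zero_eq: "((x::'b) - y) * (x - y) = 0 \<Longrightarrow> x = y"
  by simp

lemma prod_zero_eq: "((x::'b) - y) * (x - z) = 0 \<Longrightarrow> x = y \<or> x = z"
  by simp

lemma exists_root_K:
  assumes bF: "\<beta> \<in> range emb" and gF: "\<gamma> \<in> range emb"
    and nr: "\<forall>r\<in>range emb. r*r + \<beta>*r + \<gamma> \<noteq> 0"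
  shows "\<exists>t. t*t + \<beta>*t + \<gamma> = 0 \<and> t \<notin> range emb"
proof -
  define Fs where "Fs = range emb"
  have cFs: "card Fs = q" and fFs: "finite Fs" unfolding Fs_def using card_range_emb by auto
  have fixFs: "r \<in> Fs \<Longrightarrow> r ^ q = r" for r unfolding Fs_def using fixed_iff by blast
  define \<psi> where "\<psi> t = (t + t ^ q, t ^ q * t)" for t :: 'b
  have psiF: "\<psi> t \<in> Fs \<times> Fs" for t
    unfolding \<psi>_def Fs_def using fixed_iff[of "t + t^q"] fixed_iff[of "t^q * t"]
    by (auto simp: frob_add frob_mult powqq add.commute mult.commute)
  have psi_root: "\<psi> t = (u, v) \<Longrightarrow> t * t - u * t + v = 0" for t u v
    unfolding \<psi>_def by (auto simp: algebra_simps)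
  define A1 where "A1 = {(r1, r2). r1 \<in> Fs \<and> r2 \<in> Fs \<and> r1 \<noteq> r2}"
  define f1 where "f1 = (\<lambda>(r1::'b, r2). (r1 + r2, r1 * r2))"
  define D where "D = f1 ` A1"
  have A1eq: "A1 = Fs \<times> Fs - (\<lambda>r. (r, r)) ` Fs" unfolding A1_def by auto
  have cA1: "card A1 = q * q - q"
    unfolding A1eq using fFs cFs
    by (subst card_Diff_subset) (auto simp: card_cartesian_product card_image inj_on_def)
  have fA1: "finite A1" unfolding A1eq using fFs by auto
  have "card A1 \<le> 2 * card D" unfolding D_def
  proof (rule card_le_fibers[OF fA1])
    fix v :: "'b \<times> 'b"
    obtain u w where v: "v = (u, w)" by (cases v)
    have "inj_on fst {x\<in>A1. f1 x = v}"
      by (auto simp: inj_on_def f1_def v)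
    hence "card {x\<in>A1. f1 x = v} = card (fst ` {x\<in>A1. f1 x = v})" by (simp add: card_image)
    also have "\<dots> \<le> card {z. z * z - u * z + w = 0}"
      by (intro card_mono) (auto intro: finite_subset[OF _ finite] simp: f1_def v algebra_simps)
    also have "\<dots> \<le> 2" by (rule quad_roots_le2)
    finally show "card {x\<in>A1. f1 x = v} \<le> 2" .
  qed
  hence cD: "q * q - q \<le> 2 * card D" using cA1 by simp
  define A2 where "A2 = UNIV - Fs"
  have fA2: "finite A2" by simp
  have cA2: "card A2 = q * q - q" unfolding A2_def using cFs Fq2
    by (subst card_Diff_subset) (auto simp: fFs power2_eq_square)
  define R where "R = \<psi> ` A2"
  have "card A2 \<le> 2 * card R" unfolding R_def
  proof (rule card_le_fibers[OF fA2])
    fix v :: "'b \<times> 'b"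
    obtain u w where v: "v = (u, w)" by (cases v)
    have "card {x\<in>A2. \<psi> x = v} \<le> card {z. z * z - u * z + w = 0}"
      by (intro card_mono) (auto intro: finite_subset[OF _ finite] psi_root simp: v)
    also have "\<dots> \<le> 2" by (rule quad_roots_le2)
    finally show "card {x\<in>A2. \<psi> x = v} \<le> 2" .
  qed
  hence cR: "q * q - q \<le> 2 * card R" using cA2 by simp
  define S1 where "S1 = \<psi> ` Fs"
  have psiFs: "r \<in> Fs \<Longrightarrow> \<psi> r = (r + r, r * r)" for r unfolding \<psi>_def using fixFs by simp
  have "inj_on \<psi> Fs"
  proof (rule inj_onI)
    fix r r' assume h: "r \<in> Fs" "r' \<in> Fs" "\<psi> r = \<psi> r'"
    hence e1: "r + r = r' + r'" and e2: "r * r = r' * r'" using psiFs by auto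
    have "(r - r') * (r - r') = r*r + r'*r' - r' * (r + r)" by (simp add: algebra_simps)
    also have "\<dots> = r'*r' + r'*r' - r' * (r' + r')" by (simp only: e1 e2)
    also have "\<dots> = 0" by (simp add: algebra_simps)
    finally have "(r - r') * (r - r') = 0" .
    thus "r = r'" by simp
  qed
  hence cS1: "card S1 = q" unfolding S1_def using cFs by (simp add: card_image)
  have dDS: "D \<inter> S1 = {}"
  proof (rule ccontr)
    assume "D \<inter> S1 \<noteq> {}"
    then obtain v where v: "v \<in> D" "v \<in> S1" by blast
    from v(1) obtain r1 r2 where h1: "r1 \<in> Fs" "r2 \<in> Fs" "r1 \<noteq> r2" "v = f1 (r1, r2)"
      unfolding D_def A1_def by auto
    from v(2) obtain r where h2: "r \<in> Fs" "v = \<psi> r" unfolding S1_def by auto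
    have h: "r1 \<in> Fs" "r2 \<in> Fs" "r1 \<noteq> r2" "r \<in> Fs" "f1 (r1, r2) = \<psi> r"
      using h1 h2 by auto
    hence e1: "r1 + r2 = r + r" and e2: "r1 * r2 = r * r" using psiFs by (auto simp: f1_def)
    have "(r1 - r) * (r1 - r) = 0" using e1 e2 by algebra
    moreover have "(r2 - r) * (r2 - r) = 0" using e1 e2 by algebra
    ultimately show False using h(3) by simp
  qed
  have dDR: "D \<inter> R = {}"
  proof (rule ccontr)
    assume "D \<inter> R \<noteq> {}"
    then obtain v where v: "v \<in> D" "v \<in> R" by blast
    from v(1) obtain r1 r2 where h1: "r1 \<in> Fs" "r2 \<in> Fs" "v = f1 (r1, r2)"
      unfolding D_def A1_def by auto
    from v(2) obtain t where h2: "t \<notin> Fs" "v = \<psi> t" unfolding R_def A2_def by auto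
    have h: "r1 \<in> Fs" "r2 \<in> Fs" "t \<notin> Fs" "f1 (r1, r2) = \<psi> t"
      using h1 h2 by auto
    hence "t * t - (r1 + r2) * t + r1 * r2 = 0" using psi_root by (simp add: f1_def)
    hence "(t - r1) * (t - r2) = 0" by (simp add: algebra_simps)
    thus False using h by auto
  qed
  have dSR: "S1 \<inter> R = {}"
  proof (rule ccontr)
    assume "S1 \<inter> R \<noteq> {}"
    then obtain v where v: "v \<in> S1" "v \<in> R" by blast
    from v(1) obtain r where h1: "r \<in> Fs" "v = \<psi> r" unfolding S1_def by auto
    from v(2) obtain t where h2: "t \<notin> Fs" "v = \<psi> t" unfolding R_def A2_def by auto
    have h: "r \<in> Fs" "t \<notin> Fs" "\<psi> r = \<psi> t"
      using h1 h2 by auto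
    hence "t * t - (r + r) * t + r * r = 0" using psi_root psiFs by metis
    hence "(t - r) * (t - r) = 0" by (simp add: algebra_simps)
    thus False using h by auto
  qed
  have "D \<subseteq> Fs \<times> Fs"
    unfolding D_def A1_def f1_def by (auto simp: Fs_def emb_add[symmetric] emb_mult[symmetric])
  moreover have "S1 \<subseteq> Fs \<times> Fs" "R \<subseteq> Fs \<times> Fs" unfolding S1_def R_def using psiF by blast+
  ultimately have sub: "D \<union> S1 \<union> R \<subseteq> Fs \<times> Fs" by blast
  have fin: "finite D" "finite S1" "finite R" by auto
  have "card (D \<union> S1 \<union> R) = card D + card S1 + card R"
    using fin dDS dDR dSR by (simp add: card_Un_disjoint Int_Un_distrib2)
  also have "\<dots> \<ge> q * q" using cD cR cS1 q2 by simp
  finally have "card (D \<union> S1 \<union> R) \<ge> card (Fs \<times> Fs)"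
    using cFs by (simp add: card_cartesian_product)
  moreover have "card (D \<union> S1 \<union> R) \<le> card (Fs \<times> Fs)"
    by (rule card_mono) (use fFs sub in auto)
  ultimately have alleq: "D \<union> S1 \<union> R = Fs \<times> Fs"
    using sub by (intro card_subset_eq) (auto simp: fFs)
  have mem: "(- \<beta>, \<gamma>) \<in> Fs \<times> Fs" using bF gF
    by (auto simp: Fs_def emb_neg[symmetric])
  have "(- \<beta>, \<gamma>) \<notin> D"
  proof
    assume "(- \<beta>, \<gamma>) \<in> D"
    then obtain r1 r2 where h: "r1 \<in> Fs" "- \<beta> = r1 + r2" "\<gamma> = r1 * r2"
      unfolding D_def A1_def f1_def by auto
    have "r1 * r1 + \<beta> * r1 + \<gamma> = 0" using h(2,3) by algebra
    thus False using nr h(1) unfolding Fs_def by blast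
  qed
  moreover have "(- \<beta>, \<gamma>) \<notin> S1"
  proof
    assume "(- \<beta>, \<gamma>) \<in> S1"
    then obtain r where h: "r \<in> Fs" "- \<beta> = r + r" "\<gamma> = r * r"
      unfolding S1_def using psiFs by force
    have "r * r + \<beta> * r + \<gamma> = 0" using h(2,3) by algebra
    thus False using nr h(1) unfolding Fs_def by blast
  qed
  ultimately have "(- \<beta>, \<gamma>) \<in> R" using alleq mem by blast
  then obtain t where t: "t \<notin> Fs" "\<psi> t = (- \<beta>, \<gamma>)" unfolding R_def A2_def by auto
  have "t * t - (- \<beta>) * t + \<gamma> = 0" by (rule psi_root[OF t(2)])
  thus ?thesis using t(1) unfolding Fs_def by auto
qed

end


context ell begin

lemma norm_fixed: "((t::'b) ^ q * t) ^ q = t ^ q * t"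
  by (simp add: frob_mult powqq mult.commute)

lemma norm_in: "(t::'b) ^ q * t \<in> range emb"
  using fixed_iff norm_fixed by blast

lemma norm_fiber_le:
  assumes "l \<noteq> 0"
  shows "card {t::'b. t ^ q * t = l} \<le> q + 1"
proof -
  define p :: "'b poly" where "p = monom 1 (q + 1) - [:l:]"
  have cp: "coeff p (q+1) = 1" by (simp add: p_def coeff_monom)
  hence p0: "p \<noteq> 0" by auto
  have dp: "degree p \<le> q + 1"
    unfolding p_def by (rule degree_diff_le) (auto simp: degree_monom_le)
  have "{t::'b. t ^ q * t = l} \<subseteq> {x. poly p x = 0}"
    by (auto simp: p_def poly_monom)
  hence "card {t::'b. t ^ q * t = l} \<le> card {x. poly p x = 0}"
    by (intro card_mono) (auto intro: poly_roots_finite p0)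
  also have "\<dots> \<le> degree p" by (rule card_poly_roots_bound) fact
  finally show ?thesis using dp by simp
qed

lemma norm_fiber:
  assumes "l \<in> range emb" "l \<noteq> 0"
  shows "card {t::'b. t ^ q * t = l} = q + 1"
proof (rule ccontr)
  assume ne: "card {t::'b. t ^ q * t = l} \<noteq> q + 1"
  define L where "L = range emb - {0::'b}"
  define fib where "fib m = {t::'b. t ^ q * t = m}" for m
  have cL: "card L = q - 1" unfolding L_def using card_range_emb by (simp add: card_Diff_singleton_if)
  have "UNIV - {0::'b} = (\<Union>m\<in>L. fib m)"
    unfolding L_def fib_def using norm_in by auto
  hence "card (UNIV - {0::'b}) = card (\<Union>m\<in>L. fib m)" by simp
  also have "\<dots> = (\<Sum>m\<in>L. card (fib m))"
    by (rule card_UN_disjoint) (auto simp: fib_def)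
  also have "\<dots> < (\<Sum>m\<in>L. q + 1)"
  proof (rule sum_strict_mono_ex1)
    show "\<forall>x\<in>L. card (fib x) \<le> q + 1" using norm_fiber_le unfolding fib_def L_def by auto
    show "\<exists>a\<in>L. card (fib a) < q + 1"
      using assms ne norm_fiber_le[of l] unfolding fib_def L_def by (intro bexI[of _ l]) auto
  qed (simp add: L_def)
  also have "\<dots> = (q - 1) * (q + 1)" using cL by simp
  finally have "q ^ 2 - 1 < (q - 1) * (q + 1)" using Fq2 by (simp add: card_Diff_singleton_if)
  moreover have "(q - 1) * (q + 1) = q ^ 2 - 1" using q2
    by (cases q) (auto simp: power2_eq_square algebra_simps)
  ultimately show False by simp
qed

lemma exists_rho: "\<exists>\<rho>::'b. \<rho> ^ q * \<rho> = emb a"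
proof -
  have "card {t::'b. t ^ q * t = emb a} = q + 1" by (rule norm_fiber) (use a_nz in auto)
  hence "{t::'b. t ^ q * t = emb a} \<noteq> {}" by (intro notI) simp
  thus ?thesis by blast
qed

lemma exists_theta: "\<exists>\<theta>::'b. emb a * \<theta> * \<theta> + emb b * \<theta> + emb c = 0 \<and> \<theta> \<notin> range emb"
proof -
  have "\<exists>t. t*t + emb (b/a)*t + emb (c/a) = 0 \<and> t \<notin> range emb"
  proof (rule exists_root_K)
    show "\<forall>r\<in>range emb. r*r + emb (b/a)*r + emb (c/a) \<noteq> 0"
    proof
      fix r assume "r \<in> range emb"
      then obtain x where x: "r = emb x" by auto
      have "a * x^2 + b * x + c \<noteq> 0" by (rule Q_noroot)
      hence "x*x + (b/a)*x + c/a \<noteq> 0" using a_nz by (simp add: field_simps power2_eq_square)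
      hence "emb (x*x + (b/a)*x + c/a) \<noteq> 0" by simp
      moreover have "emb (x*x + (b/a)*x + c/a) = r*r + emb (b/a)*r + emb (c/a)"
        by (simp only: x emb_add emb_mult)
      ultimately show "r*r + emb (b/a)*r + emb (c/a) \<noteq> 0" by metis
    qed
  qed auto
  then obtain t where t: "t*t + emb (b/a)*t + emb (c/a) = 0" "t \<notin> range emb" by blast
  have "emb a * (t*t + emb (b/a)*t + emb (c/a)) = 0" using t by simp
  moreover have "emb a * (t*t + emb (b/a)*t + emb (c/a)) = emb a * t * t + emb b * t + emb c"
    using a_nz by (simp add: emb_divide field_simps)
  ultimately have "emb a * t * t + emb b * t + emb c = 0" by simp
  thus ?thesis using t by blast
qed

end

locale ell2 = ell a b c emb q for a b c :: "'a::{field,finite}" and emb :: "'a \<Rightarrow> 'b::{field,finite}" and q +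
  fixes \<theta> \<rho> :: 'b
  assumes theta_root: "emb a * \<theta> * \<theta> + emb b * \<theta> + emb c = 0"
  and theta_notF: "\<theta> \<notin> range emb"
  and rho_norm: "\<rho> ^ q * \<rho> = emb a"
begin

definition "\<theta>' = \<theta> ^ q"
definition "\<delta> = \<theta> - \<theta>'"

lemma theta'_ne: "\<theta>' \<noteq> \<theta>"
  using theta_notF fixed_iff unfolding \<theta>'_def by blast

lemma delta_nz: "\<delta> \<noteq> 0" using theta'_ne unfolding \<delta>_def by simp

lemma delta_q: "\<delta> ^ q = - \<delta>"
  by (simp add: \<delta>_def \<theta>'_def frob_diff powqq)

lemma theta'_q: "\<theta>' ^ q = \<theta>" by (simp add: \<theta>'_def powqq)

lemma rho_nz: "\<rho> \<noteq> 0" using rho_norm a_nz by auto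

lemma theta'_root: "emb a * \<theta>' * \<theta>' + emb b * \<theta>' + emb c = 0"
proof -
  have "(emb a * \<theta> * \<theta> + emb b * \<theta> + emb c) ^ q = 0" using theta_root by simp
  thus ?thesis by (simp add: frob_add frob_mult emb_powq \<theta>'_def)
qed

lemma vieta1: "emb a * (\<theta> + \<theta>') = - emb b"
proof -
  have "(\<theta> - \<theta>') * (emb a * (\<theta> + \<theta>') + emb b) =
     (emb a * \<theta> * \<theta> + emb b * \<theta> + emb c) - (emb a * \<theta>' * \<theta>' + emb b * \<theta>' + emb c)"
    by (simp add: algebra_simps)
  hence "(\<theta> - \<theta>') * (emb a * (\<theta> + \<theta>') + emb b) = 0"
    using theta_root theta'_root by simp
  thus ?thesis using theta'_ne by (simp add: eq_neg_iff_add_eq_0)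
qed

lemma vieta2: "emb a * (\<theta> * \<theta>') = emb c"
proof -
  have hc0: "emb c = -(emb a*\<theta>*\<theta> + emb b*\<theta>)" using theta_root
    by (metis add.commute eq_neg_iff_add_eq_0)
  have hb: "emb b = - (emb a * (\<theta>+\<theta>'))" using vieta1 by simp
  show ?thesis unfolding hc0 hb by (simp add: algebra_simps)
qed

lemma Q_factor: "emb (a * x1^2 + b * x1 * x2 + c * x2^2) = emb a * ((emb x1 - \<theta> * emb x2) * (emb x1 - \<theta>' * emb x2))"
proof -
  have "emb (a * x1^2 + b * x1 * x2 + c * x2^2) = emb a * emb x1 ^ 2 + emb b * emb x1 * emb x2 + emb c * emb x2 ^ 2"
    by (simp add: emb_add emb_mult emb_pow)
  also have "\<dots> = emb a * emb x1 ^ 2 - emb a * (\<theta> + \<theta>') * emb x1 * emb x2 + emb a * (\<theta> * \<theta>') * emb x2 ^ 2"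
    by (simp add: vieta1 vieta2)
  also have "\<dots> = emb a * ((emb x1 - \<theta> * emb x2) * (emb x1 - \<theta>' * emb x2))"
    by (simp add: algebra_simps power2_eq_square)
  finally show ?thesis .
qed

end


locale graded =
  fixes mon :: "nat \<Rightarrow> 'k \<Rightarrow> 'p \<Rightarrow> 'c::field" and I :: "nat \<Rightarrow> 'k set"
    and comb :: "nat \<Rightarrow> nat \<Rightarrow> 'k \<Rightarrow> 'k \<Rightarrow> 'k" and k0 :: 'k
  assumes fin: "finite (I n)"
  and comb_mem: "k \<in> I m \<Longrightarrow> l \<in> I n \<Longrightarrow> comb m n k l \<in> I (m+n)"
  and comb_mon: "k \<in> I m \<Longrightarrow> l \<in> I n \<Longrightarrow> mon m k P * mon n l P = mon (m+n) (comb m n k l) P"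
  and k0_mem: "k0 \<in> I 0"
  and k0_one: "mon 0 k0 P = 1"
begin

definition sp :: "nat \<Rightarrow> ('p \<Rightarrow> 'c) set" where
  "sp n = {f. \<exists>\<alpha>. f = (\<lambda>P. \<Sum>k\<in>I n. \<alpha> k * mon n k P)}"

lemma spI: "f = (\<lambda>P. \<Sum>k\<in>I n. \<alpha> k * mon n k P) \<Longrightarrow> f \<in> sp n"
  unfolding sp_def by blast

lemma spE: "f \<in> sp n \<Longrightarrow> (\<And>\<alpha>. f = (\<lambda>P. \<Sum>k\<in>I n. \<alpha> k * mon n k P) \<Longrightarrow> thesis) \<Longrightarrow> thesis"
  unfolding sp_def by blast

lemma sp_mon:
  assumes "k \<in> I n" shows "mon n k \<in> sp n"
proof (rule spI[where \<alpha>="\<lambda>j. if j = k then 1 else 0"], rule ext)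
  fix P
  have "(\<Sum>j\<in>I n. (if j = k then 1 else 0) * mon n j P) = (\<Sum>j\<in>I n. if j = k then mon n j P else 0)"
    by (rule sum.cong) auto
  also have "\<dots> = mon n k P" using assms by (simp add: sum.delta fin)
  finally show "mon n k P = (\<Sum>j\<in>I n. (if j = k then 1 else 0) * mon n j P)" by simp
qed

lemma sp_zero: "(\<lambda>P. 0) \<in> sp n"
  by (rule spI[where \<alpha>="\<lambda>j. 0"]) simp

lemma sp_add: "f \<in> sp n \<Longrightarrow> g \<in> sp n \<Longrightarrow> (\<lambda>P. f P + g P) \<in> sp n"
  apply (elim spE)
  subgoal for \<alpha> \<beta> by (rule spI[where \<alpha>="\<lambda>k. \<alpha> k + \<beta> k"]) (simp add: sum.distrib algebra_simps)
  done

lemma sp_smult: "f \<in> sp n \<Longrightarrow> (\<lambda>P. c * f P) \<in> sp n"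
  apply (elim spE)
  subgoal for \<alpha> by (rule spI[where \<alpha>="\<lambda>k. c * \<alpha> k"]) (simp add: sum_distrib_left algebra_simps)
  done

lemma sp_sum: "(\<And>x. x \<in> A \<Longrightarrow> f x \<in> sp n) \<Longrightarrow> (\<lambda>P. \<Sum>x\<in>A. f x P) \<in> sp n"
proof (induction A rule: infinite_finite_induct)
  case (insert x F)
  have "(\<lambda>P. f x P + (\<Sum>x\<in>F. f x P)) \<in> sp n" using insert by (intro sp_add) auto
  thus ?case using insert by simp
qed (simp_all add: sp_zero)

lemma sp_mult: "f \<in> sp m \<Longrightarrow> g \<in> sp n \<Longrightarrow> (\<lambda>P. f P * g P) \<in> sp (m+n)"
proof (elim spE)
  fix \<alpha> \<beta>
  assume f: "f = (\<lambda>P. \<Sum>k\<in>I m. \<alpha> k * mon m k P)" and g: "g = (\<lambda>P. \<Sum>k\<in>I n. \<beta> k * mon n k P)"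
  have "(\<lambda>P. f P * g P) = (\<lambda>P. \<Sum>k\<in>I m. \<Sum>l\<in>I n. (\<alpha> k * \<beta> l) * mon (m+n) (comb m n k l) P)"
    unfolding f g by (auto simp: sum_product comb_mon[symmetric] algebra_simps intro!: sum.cong)
  also have "\<dots> \<in> sp (m+n)"
    by (intro sp_sum sp_smult sp_mon comb_mem)
  finally show ?thesis .
qed

lemma sp_const: "(\<lambda>P. c) \<in> sp 0"
proof -
  have "(\<lambda>P. c * mon 0 k0 P) \<in> sp 0" by (intro sp_smult sp_mon k0_mem)
  thus ?thesis by (simp add: k0_one)
qed

lemma sp_prod: "(\<And>i. i \<in> A \<Longrightarrow> f i \<in> sp (d i)) \<Longrightarrow> (\<lambda>P. \<Prod>i\<in>A. f i P) \<in> sp (\<Sum>i\<in>A. d i)"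
proof (induction A rule: infinite_finite_induct)
  case (insert x F)
  have "(\<lambda>P. f x P * (\<Prod>i\<in>F. f i P)) \<in> sp (d x + (\<Sum>i\<in>F. d i))" using insert by (intro sp_mult) auto
  thus ?case using insert by simp
qed (simp_all add: sp_const)

lemma sp_pow: "f \<in> sp m \<Longrightarrow> (\<lambda>P. f P ^ n) \<in> sp (m * n)"
proof (induction n)
  case 0 thus ?case by (simp add: sp_const)
next
  case (Suc n)
  hence "(\<lambda>P. f P * f P ^ n) \<in> sp (m + m * n)" by (intro sp_mult) auto
  thus ?case by (simp add: algebra_simps)
qed

lemma sp_prod_pow: "(\<And>i. i \<in> A \<Longrightarrow> f i \<in> sp 1) \<Longrightarrow> (\<lambda>P. \<Prod>i\<in>A. f i P ^ e i) \<in> sp (\<Sum>i\<in>A. e i)"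
  using sp_prod[of A "\<lambda>i P. f i P ^ e i" e] sp_pow[of _ 1] by simp

end

definition hmon :: "nat \<Rightarrow> nat \<Rightarrow> nat \<times> nat \<Rightarrow> (nat \<Rightarrow> 'b::field) \<Rightarrow> 'b" where
  "hmon q n k P = (case k of (i, j) \<Rightarrow> P 0 ^ (i + q*j) * P 1 ^ ((n-i) + q*(n-j)))"

lemma hmon_graded: "graded (hmon q :: _ \<Rightarrow> _ \<Rightarrow> (nat \<Rightarrow> 'b::field) \<Rightarrow> 'b) (\<lambda>n. {0..n}\<times>{0..n}) (\<lambda>m n k l. (fst k + fst l, snd k + snd l)) (0,0)"
proof
  fix k l :: "nat \<times> nat" and m n :: nat and P :: "nat \<Rightarrow> 'b::field"
  assume k: "k \<in> {0..m}\<times>{0..m}" and l: "l \<in> {0..n}\<times>{0..n}"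
  obtain i j where ij: "k = (i,j)" by (cases k)
  obtain i' j' where ij': "l = (i',j')" by (cases l)
  have e1: "(i + q * j) + (i' + q * j') = (i + i') + q * (j + j')" by (simp add: algebra_simps)
  have d1: "(m + n) - (i + i') = (m - i) + (n - i')" and d2: "(m + n) - (j + j') = (m - j) + (n - j')"
    using k l by (auto simp: ij ij')
  have e2: "((m - i) + q * (m - j)) + ((n - i') + q * (n - j')) = ((m + n) - (i + i')) + q * ((m + n) - (j + j'))"
    unfolding d1 d2 by (simp add: algebra_simps)
  show "hmon q m k P * hmon q n l P = hmon q (m + n) (fst k + fst l, snd k + snd l) P"
    unfolding hmon_def ij ij' using e1 e2 by (simp add: power_add[symmetric] algebra_simps)
  show "(fst k + fst l, snd k + snd l) \<in> {0..m+n}\<times>{0..m+n}" using k l by (auto simp: ij ij')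
qed (auto simp: hmon_def)

definition fmon :: "nat \<Rightarrow> (nat \<Rightarrow> nat) \<Rightarrow> (nat \<Rightarrow> 'c::field) \<Rightarrow> 'c" where
  "fmon n e P = (\<Prod>i\<le>3. P i ^ e i)"

lemma finite_monomials: "finite (monomials r n)"
proof -
  have "monomials r n \<subseteq> (\<lambda>g i. if i \<le> r then g i else 0) ` ({..r} \<rightarrow>\<^sub>E {..n})"
  proof
    fix e assume e: "e \<in> monomials r n"
    hence le: "e i \<le> n" if "i \<le> r" for i
      using that by (auto simp: monomials_def intro: member_le_sum[of i "{..r}" e, simplified])
    show "e \<in> (\<lambda>g i. if i \<le> r then g i else 0) ` ({..r} \<rightarrow>\<^sub>E {..n})"
      by (rule image_eqI[of _ _ "restrict e {..r}"]) (use e le in \<open>auto simp: monomials_def\<close>)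
  qed
  thus ?thesis by (rule finite_subset) (intro finite_imageI finite_PiE, auto)
qed

lemma fmon_graded: "graded (fmon :: _ \<Rightarrow> _ \<Rightarrow> (nat \<Rightarrow> 'c::field) \<Rightarrow> 'c) (monomials 3) (\<lambda>m n e e' i. e i + e' i) (\<lambda>_. 0)"
proof
  show "finite (monomials 3 n)" for n by (rule finite_monomials)
  fix k l m n assume "k \<in> monomials 3 m" "l \<in> monomials 3 n"
  thus "(\<lambda>i. k i + l i) \<in> monomials 3 (m + n)" by (auto simp: monomials_def sum.distrib)
  show "fmon m k P * fmon n l P = fmon (m + n) (\<lambda>i. k i + l i) P" for P :: "nat \<Rightarrow> 'c"
    by (simp add: fmon_def prod.distrib[symmetric] power_add)
qed (auto simp: fmon_def monomials_def)


definition pt1 :: "'b::field \<Rightarrow> nat \<Rightarrow> 'b" where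
  "pt1 t = (\<lambda>i. if i = 0 then 1 else if i = 1 then t else 0)"

definition pinf :: "nat \<Rightarrow> 'b::field" where
  "pinf = (\<lambda>i. if i = 1 then 1 else 0)"

lemma P1_char: "proj_points 1 = range pt1 \<union> {pinf}"
proof
  show "proj_points 1 \<subseteq> range pt1 \<union> {pinf}"
  proof
    fix P :: "nat \<Rightarrow> 'b" assume "P \<in> proj_points 1"
    then obtain i where P: "\<forall>j>1. P j = 0" "i \<le> 1" "P i = 1" "\<forall>j<i. P j = 0"
      unfolding proj_points_def by blast
    show "P \<in> range pt1 \<union> {pinf}"
    proof (cases "i = 0")
      case True
      hence "P = pt1 (P 1)" using P by (auto simp: pt1_def fun_eq_iff)
      thus ?thesis by auto
    next
      case False
      hence "i = 1" using P by auto
      have "P x = pinf x" for x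
      proof (cases "x = 0 \<or> x = 1")
        case False
        hence "x > 1" by arith
        thus ?thesis using P by (auto simp: pinf_def)
      qed (use P \<open>i = 1\<close> in \<open>auto simp: pinf_def\<close>)
      hence "P = pinf" by (simp add: fun_eq_iff)
      thus ?thesis by auto
    qed
  qed
  show "range pt1 \<union> {pinf} \<subseteq> proj_points 1"
    by (auto simp: proj_points_def pt1_def pinf_def intro: exI[of _ 0] exI[of _ 1])
qed

lemma pt1_inj: "inj pt1"
  by (rule injI) (metis (mono_tags) pt1_def one_neq_zero)

lemma pinf_notin: "(pinf :: nat \<Rightarrow> 'b::field) \<notin> range pt1"
proof -
  have "pt1 t \<noteq> (pinf :: nat \<Rightarrow> 'b)" for t :: 'b
  proof
    assume "pt1 t = pinf"
    hence "pt1 t 0 = (pinf :: nat \<Rightarrow> 'b) 0" by simp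
    thus False by (simp add: pt1_def pinf_def)
  qed
  thus ?thesis by (metis rangeE)
qed

lemma card_P1: "card (proj_points 1 :: (nat \<Rightarrow> 'b::{field,finite}) set) = card (UNIV :: 'b set) + 1"
proof -
  have "card (range (pt1 :: 'b \<Rightarrow> _) \<union> {pinf}) = card (range (pt1 :: 'b \<Rightarrow> _)) + 1"
    using pinf_notin by (subst card_Un_disjoint) auto
  thus ?thesis unfolding P1_char using card_image[OF pt1_inj] by simp
qed

context ell begin

lemma Q_zero:
  assumes "a * x^2 + b * x * y + c * y^2 = 0" shows "x = 0 \<and> y = 0"
proof (cases "y = 0")
  case True
  thus ?thesis using assms a_nz by simp
next
  case False
  have "a * (x/y)^2 + b * (x/y) + c = (a * x^2 + b * x * y + c * y^2) / y^2"
    using False by (simp add: field_simps power2_eq_square)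
  hence "a * (x/y)^2 + b * (x/y) + c = 0" using assms by simp
  thus ?thesis using Q_noroot by blast
qed

end

context ell2 begin

definition XX :: "nat \<Rightarrow> (nat \<Rightarrow> 'b) \<Rightarrow> 'b" where
  "XX i P = (if i = 0 then P 0 ^ q * P 0
     else if i = 1 then (\<theta> * inverse \<rho> ^ q * (P 0 * P 1 ^ q) - \<theta>' * inverse \<rho> * (P 0 ^ q * P 1)) / \<delta>
     else if i = 2 then (inverse \<rho> ^ q * (P 0 * P 1 ^ q) - inverse \<rho> * (P 0 ^ q * P 1)) / \<delta>
     else if i = 3 then P 1 ^ q * P 1 else 0)"

lemma XX_fixed: "XX i P ^ q = XX i P"
proof -
  define ri where "ri = inverse \<rho>"
  define Zb where "Zb = P 0 * P 1 ^ q"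
  define Z where "Z = P 0 ^ q * P 1"
  have Zb_q: "Zb ^ q = Z" unfolding Zb_def Z_def by (simp only: frob_mult powqq)
  have Z_q: "Z ^ q = Zb" unfolding Zb_def Z_def by (simp only: frob_mult powqq)
  have ri_q: "(ri ^ q) ^ q = ri" by (rule powqq)
  have th_q: "\<theta> ^ q = \<theta>'" by (simp add: \<theta>'_def)
  consider "i = 0" | "i = 1" | "i = 2" | "i = 3" | "i > 3" by arith
  thus ?thesis
  proof cases
    case 2
    have X: "XX i P = (\<theta> * ri ^ q * Zb - \<theta>' * ri * Z) / \<delta>" by (simp add: XX_def 2 ri_def Zb_def Z_def)
    have "XX i P ^ q = (\<theta> ^ q * (ri ^ q) ^ q * Zb ^ q - \<theta>' ^ q * ri ^ q * Z ^ q) / \<delta> ^ q"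
      by (simp only: X power_divide frob_diff frob_mult)
    also have "\<dots> = (\<theta>' * ri * Z - \<theta> * ri ^ q * Zb) / (- \<delta>)"
      by (simp only: th_q ri_q Zb_q Z_q theta'_q delta_q)
    also have "\<dots> = XX i P" using delta_nz by (simp add: X field_simps)
    finally show ?thesis .
  next
    case 3
    have X: "XX i P = (ri ^ q * Zb - ri * Z) / \<delta>" by (simp add: XX_def 3 ri_def Zb_def Z_def)
    have "XX i P ^ q = ((ri ^ q) ^ q * Zb ^ q - ri ^ q * Z ^ q) / \<delta> ^ q"
      by (simp only: X power_divide frob_diff frob_mult)
    also have "\<dots> = (ri * Z - ri ^ q * Zb) / (- \<delta>)"
      by (simp only: ri_q Zb_q Z_q delta_q)
    also have "\<dots> = XX i P" using delta_nz by (simp add: X field_simps)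
    finally show ?thesis .
  qed (auto simp: XX_def norm_fixed)
qed

definition tau :: "(nat \<Rightarrow> 'b) \<Rightarrow> nat \<Rightarrow> 'a" where
  "tau P = (\<lambda>i. inv emb (XX i P))"

lemma emb_tau: "emb (tau P i) = XX i P"
  unfolding tau_def using XX_fixed fixedI by blast

lemma inv_emb_0[simp]: "inv emb 0 = 0"
  using inv_emb_emb[of 0] by simp

lemma inv_emb_1[simp]: "inv emb 1 = 1"
  using inv_emb_emb[of 1] by (simp add: emb_1)

lemma XX_pt1:
  "XX 0 (pt1 t) = 1"
  "XX (Suc 0) (pt1 t) = (\<theta> * inverse \<rho> ^ q * t ^ q - \<theta>' * inverse \<rho> * t) / \<delta>"
  "XX 2 (pt1 t) = (inverse \<rho> ^ q * t ^ q - inverse \<rho> * t) / \<delta>"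
  "XX 3 (pt1 t) = t ^ q * t"
  "i > 3 \<Longrightarrow> XX i (pt1 t) = 0"
  by (auto simp: XX_def pt1_def)

lemma XX_pinf:
  "XX 0 pinf = 0" "XX (Suc 0) pinf = 0" "XX 2 pinf = 0" "XX 3 pinf = 1" "i > 3 \<Longrightarrow> XX i pinf = 0"
  using q2 by (auto simp: XX_def pinf_def)

lemma div_helper: "d \<noteq> 0 \<Longrightarrow> A - x*B = d*C \<Longrightarrow> A/d - x*(B/d) = (C::'b)"
  by (metis diff_divide_distrib nonzero_mult_div_cancel_left times_divide_eq_right)

lemma K1: "XX (Suc 0) (pt1 t) - \<theta> * XX 2 (pt1 t) = inverse \<rho> * t"
  unfolding XX_pt1 by (rule div_helper[OF delta_nz]) (simp add: \<delta>_def algebra_simps)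

lemma K2: "XX (Suc 0) (pt1 t) - \<theta>' * XX 2 (pt1 t) = inverse \<rho> ^ q * t ^ q"
  unfolding XX_pt1 by (rule div_helper[OF delta_nz]) (simp add: \<delta>_def algebra_simps)

lemma ainvrho: "emb a * (inverse \<rho> * inverse \<rho> ^ q) = 1"
  using rho_nz by (simp add: rho_norm[symmetric] field_simps)

lemma tau_pt1_eq: "tau (pt1 t) 0 * tau (pt1 t) 3 - (a * tau (pt1 t) 1 ^ 2 + b * tau (pt1 t) 1 * tau (pt1 t) 2 + c * tau (pt1 t) 2 ^ 2) = 0"
proof -
  have "emb (a * tau (pt1 t) 1 ^ 2 + b * tau (pt1 t) 1 * tau (pt1 t) 2 + c * tau (pt1 t) 2 ^ 2)
      = emb a * ((XX (Suc 0) (pt1 t) - \<theta> * XX 2 (pt1 t)) * (XX (Suc 0) (pt1 t) - \<theta>' * XX 2 (pt1 t)))"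
    by (simp add: Q_factor emb_tau)
  also have "\<dots> = emb a * (inverse \<rho> * inverse \<rho> ^ q) * (t ^ q * t)"
    unfolding K1 K2 by (simp add: algebra_simps)
  also have "\<dots> = emb (tau (pt1 t) 0 * tau (pt1 t) 3)"
    by (simp add: ainvrho emb_mult emb_tau XX_pt1)
  finally show ?thesis by simp
qed

lemma tau_in_E: "P \<in> proj_points 1 \<Longrightarrow> tau P \<in> elliptic_quadric a b c"
proof -
  assume "P \<in> proj_points 1"
  hence "P \<in> range pt1 \<or> P = pinf" using P1_char by blast
  thus ?thesis
  proof
    assume "P \<in> range pt1"
    then obtain t where t: "P = pt1 t" by auto
    have "tau P \<in> proj_points 3"
      unfolding proj_points_def
      by (auto simp: t tau_def XX_pt1 intro!: exI[of _ 0])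
    thus ?thesis using tau_pt1_eq unfolding elliptic_quadric_def t by auto
  next
    assume P: "P = pinf"
    have tv: "tau P 0 = 0" "tau P 1 = 0" "tau P 2 = 0" "tau P 3 = 1" "i > 3 \<Longrightarrow> tau P i = 0" for i
      by (auto simp: P tau_def XX_pinf)
    have h3: "\<forall>j<3. tau P j = 0"
    proof (intro allI impI)
      fix j :: nat assume "j < 3"
      hence "j = 0 \<or> j = 1 \<or> j = 2" by arith
      thus "tau P j = 0" using tv by auto
    qed
    have "tau P \<in> proj_points 3"
      unfolding proj_points_def using tv h3 by (auto intro!: exI[of _ 3])
    thus ?thesis unfolding elliptic_quadric_def using tv by auto
  qed
qed

end


context ell2 begin

lemma tau_XX: "tau P = tau P' \<Longrightarrow> XX i P = XX i P'"
  by (metis emb_tau)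

lemma tau_inj: "inj_on tau (proj_points 1)"
proof (rule inj_onI)
  fix P P' assume P: "P \<in> proj_points 1" and P': "P' \<in> proj_points 1" and eq: "tau P = tau P'"
  have X: "XX i P = XX i P'" for i using tau_XX[OF eq] .
  from P P' have c: "(P \<in> range pt1 \<or> P = pinf) \<and> (P' \<in> range pt1 \<or> P' = pinf)" using P1_char by blast
  show "P = P'"
  proof (cases "P = pinf")
    case True
    show ?thesis
    proof (cases "P' = pinf")
      case False
      then obtain t where "P' = pt1 t" using c by blast
      thus ?thesis using X[of 0] True by (simp add: XX_pt1 XX_pinf)
    qed (use True in simp)
  next
    case False
    then obtain t where t: "P = pt1 t" using c by blast
    show ?thesis
    proof (cases "P' = pinf")
      case True
      thus ?thesis using X[of 0] t by (simp add: XX_pt1 XX_pinf)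
    next
      case False
      then obtain t' where t': "P' = pt1 t'" using c by blast
      have "XX (Suc 0) (pt1 t) - \<theta> * XX 2 (pt1 t) = XX (Suc 0) (pt1 t') - \<theta> * XX 2 (pt1 t')"
        using X[of "Suc 0"] X[of 2] t t' by simp
      hence "inverse \<rho> * t = inverse \<rho> * t'" by (simp only: K1)
      hence "t = t'" using rho_nz by simp
      thus ?thesis using t t' by simp
    qed
  qed
qed

lemma E_sub: "elliptic_quadric a b c \<subseteq> tau ` proj_points 1"
proof
  fix e assume "e \<in> elliptic_quadric a b c"
  hence e: "e \<in> proj_points 3" and eq: "e 0 * e 3 - (a * e 1 ^ 2 + b * e 1 * e 2 + c * e 2 ^ 2) = 0"
    unfolding elliptic_quadric_def by auto
  from e obtain i where ei: "\<forall>j>3. e j = 0" "i \<le> 3" "e i = 1" "\<forall>j<i. e j = 0"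
    unfolding proj_points_def by blast
  show "e \<in> tau ` proj_points 1"
  proof (cases "e 0 = 0")
    case False
    hence "i = 0" using ei by (metis neq0_conv)
    hence e0: "e 0 = 1" using ei by simp
    hence Qe: "e 3 = a * e 1 ^ 2 + b * e 1 * e 2 + c * e 2 ^ 2" using eq by simp
    define u where "u = emb (e 1)"
    define v where "v = emb (e 2)"
    define t where "t = \<rho> * (u - \<theta> * v)"
    have uq: "u ^ q = u" "v ^ q = v" unfolding u_def v_def by (simp_all add: emb_powq)
    have tq: "t ^ q = \<rho> ^ q * (u - \<theta>' * v)"
      unfolding t_def by (simp add: frob_mult frob_diff uq \<theta>'_def)
    have ri: "inverse \<rho> * \<rho> = 1" "inverse \<rho> ^ q * \<rho> ^ q = 1" using rho_nz
      by (simp_all add: power_mult_distrib[symmetric])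
    have X1: "XX (Suc 0) (pt1 t) = u"
    proof -
      have "XX (Suc 0) (pt1 t) = (\<theta> * (inverse \<rho> ^ q * \<rho> ^ q) * (u - \<theta>' * v) - \<theta>' * (inverse \<rho> * \<rho>) * (u - \<theta> * v)) / \<delta>"
        by (simp only: XX_pt1 tq) (simp add: t_def algebra_simps)
      also have "\<dots> = (\<delta> * u) / \<delta>" by (simp only: ri mult_1_right mult_1_left) (simp add: \<delta>_def algebra_simps)
      finally show ?thesis using delta_nz by simp
    qed
    have X2: "XX 2 (pt1 t) = v"
    proof -
      have "XX 2 (pt1 t) = ((inverse \<rho> ^ q * \<rho> ^ q) * (u - \<theta>' * v) - (inverse \<rho> * \<rho>) * (u - \<theta> * v)) / \<delta>"
        by (simp only: XX_pt1 tq) (simp add: t_def algebra_simps)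
      also have "\<dots> = (\<delta> * v) / \<delta>" by (simp only: ri mult_1_right mult_1_left) (simp add: \<delta>_def algebra_simps)
      finally show ?thesis using delta_nz by simp
    qed
    have X3: "XX 3 (pt1 t) = emb (e 3)"
    proof -
      have "XX 3 (pt1 t) = (\<rho> ^ q * \<rho>) * ((u - \<theta> * v) * (u - \<theta>' * v))"
        by (simp only: XX_pt1 tq) (simp add: t_def algebra_simps)
      also have "\<dots> = emb (e 3)" unfolding Qe Q_factor rho_norm u_def v_def ..
      finally show ?thesis .
    qed
    have "tau (pt1 t) = e"
    proof
      fix j :: nat
      consider "j = 0" | "j = 1" | "j = 2" | "j = 3" | "j > 3" by arith
      thus "tau (pt1 t) j = e j"
      proof cases
        case 1 thus ?thesis using e0 emb_tau[of "pt1 t" 0] by (simp add: XX_pt1 emb_1[symmetric])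
      next
        case 2 thus ?thesis using emb_tau[of "pt1 t" 1] X1 by (simp add: u_def)
      next
        case 3 thus ?thesis using emb_tau[of "pt1 t" 2] X2 by (simp add: v_def)
      next
        case 4 thus ?thesis using emb_tau[of "pt1 t" 3] X3 by simp
      next
        case 5 thus ?thesis using emb_tau[of "pt1 t" j] ei(1) by (simp add: XX_pt1)
      qed
    qed
    moreover have "pt1 t \<in> proj_points 1" using P1_char by blast
    ultimately show ?thesis by blast
  next
    case True
    hence "a * e 1 ^ 2 + b * e 1 * e 2 + c * e 2 ^ 2 = 0" using eq
      by (simp only: mult_zero_left diff_0 neg_equal_0_iff_equal)
    hence z: "e 1 = 0" "e 2 = 0" using Q_zero by blast+
    have ne: "e i \<noteq> 0" using ei(3) by simp
    have "i \<noteq> 0" "i \<noteq> 1" "i \<noteq> 2" using ne True z by metis+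
    hence "i = 3" using ei by arith
    hence e3: "e 3 = 1" using ei by simp
    have "tau pinf = e"
    proof
      fix j :: nat
      consider "j = 0" | "j = 1" | "j = 2" | "j = 3" | "j > 3" by arith
      thus "tau pinf j = e j"
      proof cases
        case 1 thus ?thesis using True emb_tau[of pinf 0] by (simp add: XX_pinf)
      next
        case 2 thus ?thesis using z emb_tau[of pinf 1] by (simp add: XX_pinf)
      next
        case 3 thus ?thesis using z emb_tau[of pinf 2] by (simp add: XX_pinf)
      next
        case 4 thus ?thesis using e3 emb_tau[of pinf 3] by (simp add: XX_pinf emb_1[symmetric])
      next
        case 5 thus ?thesis using emb_tau[of pinf j] ei(1) by (simp add: XX_pinf)
      qed
    qed
    moreover have "pinf \<in> proj_points 1" using P1_char by blast
    ultimately show ?thesis by blast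
  qed
qed

lemma tau_bij: "bij_betw tau (proj_points 1) (elliptic_quadric a b c)"
  unfolding bij_betw_def using tau_inj E_sub tau_in_E by blast

lemma card_E: "card (elliptic_quadric a b c) = q ^ 2 + 1"
  using bij_betw_same_card[OF tau_bij] card_P1[where 'b='b] Fq2 by simp

end


declare One_nat_def [simp del]

interpretation FS: graded "fmon :: _ \<Rightarrow> _ \<Rightarrow> (nat \<Rightarrow> 'c::field) \<Rightarrow> 'c" "monomials 3" "\<lambda>m n e e' i. e i + e' i" "\<lambda>_. 0"
  by (rule fmon_graded)

lemma FS_coord: "i \<le> 3 \<Longrightarrow> (\<lambda>v. v i :: 'c::field) \<in> FS.sp 1"
proof -
  assume i: "i \<le> 3"
  define e where "e = (\<lambda>j::nat. if j = i then 1 else 0 :: nat)"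
  have em: "e \<in> monomials 3 1" using i by (auto simp: e_def monomials_def)
  have "fmon 1 e = (\<lambda>v::nat \<Rightarrow> 'c. v i)"
  proof
    fix v :: "nat \<Rightarrow> 'c"
    have "fmon 1 e v = (\<Prod>j\<le>3. if j = i then v j else 1)"
      unfolding fmon_def e_def by (intro prod.cong) auto
    also have "\<dots> = v i" using i by (simp add: prod.delta)
    finally show "fmon 1 e v = v i" .
  qed
  moreover have "fmon 1 e \<in> (FS.sp 1 :: ((nat \<Rightarrow> 'c) \<Rightarrow> 'c) set)" by (rule FS.sp_mon[OF em])
  ultimately show ?thesis by simp
qed

lemma eval_code_sp: "eval_code 3 X s = {res X g | g. g \<in> FS.sp s}"
  unfolding eval_code_def FS.sp_def fmon_def by blast

lemma Bext_sp: "Bext q s = {res (proj_points 1) g | g. g \<in> graded.sp (hmon q :: _ \<Rightarrow> _ \<Rightarrow> (nat \<Rightarrow> 'b::field) \<Rightarrow> 'b) (\<lambda>n. {0..n}\<times>{0..n}) s}"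
proof -
  interpret HS: graded "hmon q :: _ \<Rightarrow> _ \<Rightarrow> (nat \<Rightarrow> 'b::field) \<Rightarrow> 'b" "\<lambda>n. {0..n}\<times>{0..n}" "\<lambda>m n k l. (fst k + fst l, snd k + snd l)" "(0,0)"
    by (rule hmon_graded)
  have "(\<lambda>P. \<Sum>(i,j)\<in>{0..s}\<times>{0..s}. \<alpha> (i,j) * (P 0 ^ (i + q*j) * P 1 ^ ((s-i) + q*(s-j)))) =
        (\<lambda>P::nat \<Rightarrow> 'b. \<Sum>k\<in>{0..s}\<times>{0..s}. \<alpha> k * hmon q s k P)" for \<alpha>
    by (intro ext sum.cong) (auto simp: hmon_def)
  note eqa = this
  show ?thesis unfolding Bext_def HS.sp_def
  proof (intro set_eqI iffI)
    fix x :: "(nat \<Rightarrow> 'b) \<Rightarrow> 'b" assume "x \<in> {res (proj_points 1) (\<lambda>P. \<Sum>(i,j)\<in>{0..s}\<times>{0..s}. \<alpha> (i,j) * (P 0 ^ (i + q*j) * P 1 ^ ((s-i) + q*(s-j)))) | \<alpha>. True}"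
    then obtain \<alpha> :: "nat \<times> nat \<Rightarrow> 'b" where xa: "x = res (proj_points 1) (\<lambda>P. \<Sum>(i,j)\<in>{0..s}\<times>{0..s}. \<alpha> (i,j) * (P 0 ^ (i + q*j) * P 1 ^ ((s-i) + q*(s-j))))" by blast
    show "x \<in> {res (proj_points 1) g |g. g \<in> {f. \<exists>\<alpha>. f = (\<lambda>P. \<Sum>k\<in>{0..s}\<times>{0..s}. \<alpha> k * hmon q s k P)}}"
      apply (rule CollectI)
      apply (rule exI[of _ "\<lambda>P. \<Sum>k\<in>{0..s}\<times>{0..s}. \<alpha> k * hmon q s k P"])
      using xa eqa[of \<alpha>] by auto
  next
    fix x :: "(nat \<Rightarrow> 'b) \<Rightarrow> 'b" assume "x \<in> {res (proj_points 1) g |g. g \<in> {f. \<exists>\<alpha>. f = (\<lambda>P. \<Sum>k\<in>{0..s}\<times>{0..s}. \<alpha> k * hmon q s k P)}}"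
    then obtain \<alpha> :: "nat \<times> nat \<Rightarrow> 'b" where xa: "x = res (proj_points 1) (\<lambda>P. \<Sum>k\<in>{0..s}\<times>{0..s}. \<alpha> k * hmon q s k P)" by blast
    show "x \<in> {res (proj_points 1) (\<lambda>P. \<Sum>(i,j)\<in>{0..s}\<times>{0..s}. \<alpha> (i,j) * (P 0 ^ (i + q*j) * P 1 ^ ((s-i) + q*(s-j)))) | \<alpha>. True}"
      apply (rule CollectI)
      apply (rule exI[of _ \<alpha>])
      using xa eqa[of \<alpha>] by auto
  qed
qed

sublocale ell2 \<subseteq> HS: graded "hmon q :: _ \<Rightarrow> _ \<Rightarrow> (nat \<Rightarrow> 'b) \<Rightarrow> 'b" "\<lambda>n. {0..n}\<times>{0..n}" "\<lambda>m n k l. (fst k + fst l, snd k + snd l)" "(0,0)"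
  by (rule hmon_graded)

context ell2 begin

lemma XX_HS: "i \<le> 3 \<Longrightarrow> XX i \<in> HS.sp 1"
proof -
  assume i: "i \<le> 3"
  have m: "hmon q 1 (1,1) \<in> HS.sp 1" "hmon q 1 (0,0) \<in> HS.sp 1" "hmon q 1 (1,0) \<in> HS.sp 1" "hmon q 1 (0,1) \<in> HS.sp 1"
    by (auto intro!: HS.sp_mon)
  have h: "hmon q 1 (1,1) P = P 0 ^ q * P 0" "hmon q 1 (0,0) P = P 1 ^ q * P 1"
     "hmon q 1 (1,0) P = P 0 * P 1 ^ q" "hmon q 1 (0,1) P = P 0 ^ q * P 1" for P :: "nat \<Rightarrow> 'b"
    by (simp_all add: hmon_def mult.commute power_add)
  consider "i = 0" | "i = 1" | "i = 2" | "i = 3" using i by arith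
  thus ?thesis
  proof cases
    case 1
    have "XX i = hmon q 1 (1,1)" by (rule ext) (simp add: XX_def 1 h)
    thus ?thesis using m by simp
  next
    case 4
    have "XX i = hmon q 1 (0,0)" by (rule ext) (simp add: XX_def 4 h)
    thus ?thesis using m by simp
  next
    case 2
    have eq: "XX i = (\<lambda>P. (\<theta> * inverse \<rho> ^ q / \<delta>) * hmon q 1 (1,0) P + (- \<theta>' * inverse \<rho> / \<delta>) * hmon q 1 (0,1) P)"
      by (rule ext) (simp add: XX_def 2 h diff_divide_distrib)
    show ?thesis unfolding eq by (intro HS.sp_add HS.sp_smult m)
  next
    case 3
    have eq: "XX i = (\<lambda>P. (inverse \<rho> ^ q / \<delta>) * hmon q 1 (1,0) P + (- inverse \<rho> / \<delta>) * hmon q 1 (0,1) P)"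
      by (rule ext) (simp add: XX_def 3 h diff_divide_distrib)
    show ?thesis unfolding eq by (intro HS.sp_add HS.sp_smult m)
  qed
qed

lemma fmon_XX_HS: "e \<in> monomials 3 s \<Longrightarrow> (\<lambda>P. fmon s e (\<lambda>i. XX i P)) \<in> HS.sp s"
proof -
  assume e: "e \<in> monomials 3 s"
  have "(\<lambda>P. \<Prod>i\<le>3. XX i P ^ e i) \<in> HS.sp (\<Sum>i\<le>3. e i)"
    by (rule HS.sp_prod_pow) (auto intro: XX_HS)
  thus ?thesis using e by (simp add: fmon_def monomials_def)
qed

lemma fmon_tau: "emb (fmon s e (tau P)) = fmon s e (\<lambda>i. XX i P)"
  by (simp add: fmon_def emb_prod emb_pow emb_tau)

end



context ell2 begin

abbreviation XXv :: "(nat \<Rightarrow> 'b) \<Rightarrow> nat \<Rightarrow> 'b" where "XXv P \<equiv> (\<lambda>i. XX i P)"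

lemma XX12:
  "XX 1 P = (\<theta> * inverse \<rho> ^ q * (P 0 * P 1 ^ q) - \<theta>' * inverse \<rho> * (P 0 ^ q * P 1)) / \<delta>"
  "XX 2 P = (inverse \<rho> ^ q * (P 0 * P 1 ^ q) - inverse \<rho> * (P 0 ^ q * P 1)) / \<delta>"
  by (simp_all add: XX_def)

lemma ZZ_eq: "P 0 ^ q * P 1 = \<rho> * (XX 1 P - \<theta> * XX 2 P)"
proof -
  have "XX 1 P - \<theta> * XX 2 P = inverse \<rho> * (P 0 ^ q * P 1)"
    unfolding XX12 by (rule div_helper[OF delta_nz]) (simp add: \<delta>_def algebra_simps)
  thus ?thesis using rho_nz by (simp add: field_simps)
qed

lemma ZZb_eq: "P 0 * P 1 ^ q = \<rho> ^ q * (XX 1 P - \<theta>' * XX 2 P)"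
proof -
  have "XX 1 P - \<theta>' * XX 2 P = inverse \<rho> ^ q * (P 0 * P 1 ^ q)"
    unfolding XX12 by (rule div_helper[OF delta_nz]) (simp add: \<delta>_def algebra_simps)
  thus ?thesis using rho_nz by (simp add: field_simps)
qed

lemma L_sp: "(\<lambda>v. r * (v 1 - t * v 2)) \<in> (FS.sp 1 :: ((nat \<Rightarrow> 'b) \<Rightarrow> 'b) set)"
proof -
  have "(\<lambda>v::nat \<Rightarrow> 'b. r * v 1 + (- r * t) * v 2) \<in> FS.sp 1"
    by (intro FS.sp_add FS.sp_smult FS_coord) auto
  thus ?thesis by (simp add: algebra_simps)
qed

lemma hmon_form:
  assumes k: "k \<in> {0..s}\<times>{0..s}"
  shows "\<exists>G\<in>(FS.sp s :: ((nat \<Rightarrow> 'b) \<Rightarrow> 'b) set). \<forall>P. hmon q s k P = G (XXv P)"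
proof -
  obtain i j where ij: "k = (i,j)" by (cases k)
  have c0: "(\<lambda>v::nat \<Rightarrow> 'b. v 0) \<in> FS.sp 1" and c3: "(\<lambda>v::nat \<Rightarrow> 'b. v 3) \<in> FS.sp 1"
    by (auto intro: FS_coord)
  show ?thesis
  proof (cases "i \<le> j")
    case True
    have "j = i + (j - i) \<and> s = j + (s - j)" using True k ij by auto
    then obtain d d' where dd: "j = i + d" "s = j + d'" by blast
    define G where "G = (\<lambda>v::nat \<Rightarrow> 'b. (v 0 ^ i * (\<rho> * (v 1 - \<theta> * v 2)) ^ d) * v 3 ^ d')"
    have "G \<in> FS.sp (1 * i + 1 * d + 1 * d')"
      unfolding G_def by (intro FS.sp_mult FS.sp_pow c0 c3 L_sp)
    hence G: "G \<in> FS.sp s" using dd by simp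
    have "hmon q s k P = G (XXv P)" for P
    proof -
      have x03: "XX 0 P = P 0 ^ q * P 0" "XX 3 P = P 1 ^ q * P 1" by (simp_all add: XX_def)
      have "G (XXv P) = XX 0 P ^ i * (\<rho> * (XX 1 P - \<theta> * XX 2 P)) ^ d * XX 3 P ^ d'" by (simp add: G_def)
      also have "\<dots> = (P 0 ^ q * P 0) ^ i * (P 0 ^ q * P 1) ^ d * (P 1 ^ q * P 1) ^ d'"
        by (simp only: x03 ZZ_eq[symmetric])
      also have "\<dots> = P 0 ^ (i + q * (i + d)) * P 1 ^ ((d + d') + q * d')"
        by (simp add: power_mult_distrib power_add algebra_simps flip: power_mult)
      also have "\<dots> = hmon q s k P" by (simp add: hmon_def ij dd)
      finally show ?thesis by simp
    qed
    thus ?thesis using G by blast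
  next
    case False
    have "i = j + (i - j) \<and> s = i + (s - i)" using False k ij by auto
    then obtain d d' where dd: "i = j + d" "s = i + d'" by blast
    define G where "G = (\<lambda>v::nat \<Rightarrow> 'b. (v 0 ^ j * (\<rho> ^ q * (v 1 - \<theta>' * v 2)) ^ d) * v 3 ^ d')"
    have "G \<in> FS.sp (1 * j + 1 * d + 1 * d')"
      unfolding G_def by (intro FS.sp_mult FS.sp_pow c0 c3 L_sp)
    hence G: "G \<in> FS.sp s" using dd by simp
    have "hmon q s k P = G (XXv P)" for P
    proof -
      have x03: "XX 0 P = P 0 ^ q * P 0" "XX 3 P = P 1 ^ q * P 1" by (simp_all add: XX_def)
      have "G (XXv P) = XX 0 P ^ j * (\<rho> ^ q * (XX 1 P - \<theta>' * XX 2 P)) ^ d * XX 3 P ^ d'" by (simp add: G_def)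
      also have "\<dots> = (P 0 ^ q * P 0) ^ j * (P 0 * P 1 ^ q) ^ d * (P 1 ^ q * P 1) ^ d'"
        by (simp only: x03 ZZb_eq[symmetric])
      also have "\<dots> = P 0 ^ ((j + d) + q * j) * P 1 ^ (d' + q * (d + d'))"
        by (simp add: power_mult_distrib power_add algebra_simps flip: power_mult)
      also have "\<dots> = hmon q s k P" by (simp add: hmon_def ij dd)
      finally show ?thesis by simp
    qed
    thus ?thesis using G by blast
  qed
qed

end



context ell2 begin

lemma form_to_Bext0:
  assumes g: "g \<in> (FS.sp s :: ((nat \<Rightarrow> 'a) \<Rightarrow> 'a) set)"
  shows "res (proj_points 1) (\<lambda>P. g (tau P)) \<in> Bext0 emb q s"
proof -
  from g obtain \<alpha> where ga: "g = (\<lambda>v. \<Sum>e\<in>monomials 3 s. \<alpha> e * fmon s e v)" by (rule FS.spE)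
  define h where "h = (\<lambda>P. \<Sum>e\<in>monomials 3 s. emb (\<alpha> e) * fmon s e (XXv P))"
  have h: "h \<in> HS.sp s" unfolding h_def
    by (intro HS.sp_sum HS.sp_smult fmon_XX_HS)
  have "emb (g (tau P)) = h P" for P
    by (simp add: ga h_def emb_sum emb_mult fmon_tau)
  hence "emb \<circ> res (proj_points 1) (\<lambda>P. g (tau P)) = res (proj_points 1) h"
    by (auto simp: res_def fun_eq_iff)
  also have "\<dots> \<in> Bext q s" unfolding Bext_sp using h by blast
  finally show ?thesis unfolding Bext0_def by (auto simp: res_def)
qed

lemma Bext0_to_form:
  assumes cw: "cw \<in> Bext0 emb q s"
  shows "\<exists>g\<in>(FS.sp s :: ((nat \<Rightarrow> 'a) \<Rightarrow> 'a) set). \<forall>P\<in>proj_points 1. cw P = g (tau P)"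
proof -
  from cw have "emb \<circ> cw \<in> Bext q s" unfolding Bext0_def by blast
  then obtain h where hc: "emb \<circ> cw = res (proj_points 1) h" and h: "h \<in> HS.sp s"
    unfolding Bext_sp by blast
  from h obtain \<alpha> where ha: "h = (\<lambda>P. \<Sum>k\<in>{0..s}\<times>{0..s}. \<alpha> k * hmon q s k P)" by (rule HS.spE)
  have "\<forall>k\<in>{0..s}\<times>{0..s}. \<exists>G\<in>(FS.sp s :: ((nat \<Rightarrow> 'b) \<Rightarrow> 'b) set). \<forall>P. hmon q s k P = G (XXv P)"
    using hmon_form by blast
  then obtain Gf where Gf: "\<And>k. k \<in> {0..s}\<times>{0..s} \<Longrightarrow> Gf k \<in> FS.sp s \<and> (\<forall>P. hmon q s k P = Gf k (XXv P))"
    by metis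
  define H where "H = (\<lambda>v. \<Sum>k\<in>{0..s}\<times>{0..s}. \<alpha> k * Gf k v)"
  have "H \<in> FS.sp s" unfolding H_def by (intro FS.sp_sum FS.sp_smult) (use Gf in blast)
  then obtain \<beta> where Hb: "H = (\<lambda>v. \<Sum>e\<in>monomials 3 s. \<beta> e * fmon s e v)" by (rule FS.spE)
  have hH: "h P = H (XXv P)" for P
    unfolding ha H_def using Gf by (intro sum.cong) auto
  obtain l :: 'b where l: "l + l ^ q = 1" using exists_trace1 by blast
  define A where "A e = inv emb (l * \<beta> e + (l * \<beta> e) ^ q)" for e
  have embA: "emb (A e) = l * \<beta> e + (l * \<beta> e) ^ q" for e
    unfolding A_def by (rule fixedI) (simp add: frob_add powqq add.commute)
  define g where "g = (\<lambda>v. \<Sum>e\<in>monomials 3 s. A e * fmon s e v)"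
  have "g \<in> FS.sp s" unfolding g_def by (rule FS.spI) simp
  moreover have "cw P = g (tau P)" if P: "P \<in> proj_points 1" for P
  proof -
    define M where "M e = emb (fmon s e (tau P))" for e
    have Mq: "M e ^ q = M e" for e unfolding M_def by (rule emb_powq)
    have cP: "emb (cw P) = (\<Sum>e\<in>monomials 3 s. \<beta> e * M e)"
    proof -
      have "emb (cw P) = h P" using hc P unfolding res_def by (metis comp_apply)
      also have "\<dots> = (\<Sum>e\<in>monomials 3 s. \<beta> e * M e)"
        by (simp add: hH Hb M_def fmon_tau)
      finally show ?thesis .
    qed
    have "emb (cw P) = (l + l ^ q) * emb (cw P)" using l by simp
    also have "\<dots> = l * emb (cw P) + (l * emb (cw P)) ^ q"
      by (simp add: frob_mult emb_powq algebra_simps)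
    also have "\<dots> = (\<Sum>e\<in>monomials 3 s. (l * \<beta> e + (l * \<beta> e) ^ q) * M e)"
      by (simp add: cP sum_distrib_left frob_sum frob_mult Mq sum.distrib algebra_simps)
    also have "\<dots> = emb (g (tau P))"
      by (simp add: g_def emb_sum emb_mult embA M_def)
    finally show ?thesis by simp
  qed
  ultimately show ?thesis by blast
qed

definition sig :: "(nat \<Rightarrow> 'a) \<Rightarrow> nat \<Rightarrow> 'b" where
  "sig = inv_into (proj_points 1) tau"

lemma sig_bij: "bij_betw sig (elliptic_quadric a b c) (proj_points 1)"
  unfolding sig_def by (rule bij_betw_inv_into[OF tau_bij])

lemma sig_tau: "e \<in> elliptic_quadric a b c \<Longrightarrow> tau (sig e) = e \<and> sig e \<in> proj_points 1"
proof -
  assume "e \<in> elliptic_quadric a b c"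
  hence "e \<in> tau ` proj_points 1" using tau_bij by (auto simp: bij_betw_def)
  thus ?thesis unfolding sig_def using f_inv_into_f[of e tau] inv_into_into[of e tau] by blast
qed

lemma perm_main:
  "eval_code 3 (elliptic_quadric a b c) s = (\<lambda>d. res (elliptic_quadric a b c) (d \<circ> sig)) ` Bext0 emb q s"
proof (intro set_eqI iffI)
  fix x assume "x \<in> eval_code 3 (elliptic_quadric a b c) s"
  then obtain g where x: "x = res (elliptic_quadric a b c) g" and g: "g \<in> FS.sp s"
    unfolding eval_code_sp by blast
  define d where "d = res (proj_points 1) (\<lambda>P. g (tau P))"
  have "d \<in> Bext0 emb q s" unfolding d_def by (rule form_to_Bext0[OF g])
  moreover have "x = res (elliptic_quadric a b c) (d \<circ> sig)"
  proof (rule ext)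
    fix e show "x e = res (elliptic_quadric a b c) (d \<circ> sig) e"
    proof (cases "e \<in> elliptic_quadric a b c")
      case True with sig_tau[OF True] show ?thesis by (simp add: x d_def res_def)
    qed (simp add: x d_def res_def)
  qed
  ultimately show "x \<in> (\<lambda>d. res (elliptic_quadric a b c) (d \<circ> sig)) ` Bext0 emb q s" by blast
next
  fix x assume "x \<in> (\<lambda>d. res (elliptic_quadric a b c) (d \<circ> sig)) ` Bext0 emb q s"
  then obtain d where x: "x = res (elliptic_quadric a b c) (d \<circ> sig)" and d: "d \<in> Bext0 emb q s" by blast
  obtain g where g: "g \<in> FS.sp s" and dg: "\<forall>P\<in>proj_points 1. d P = g (tau P)"
    using Bext0_to_form[OF d] by blast
  have "x = res (elliptic_quadric a b c) g"
  proof (rule ext)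
    fix e show "x e = res (elliptic_quadric a b c) g e"
    proof (cases "e \<in> elliptic_quadric a b c")
      case True with sig_tau[OF True] dg show ?thesis by (simp add: x res_def)
    qed (simp add: x res_def)
  qed
  thus "x \<in> eval_code 3 (elliptic_quadric a b c) s" unfolding eval_code_sp using g by blast
qed

lemma perm_equiv_main:
  "perm_equiv (elliptic_quadric a b c) (eval_code 3 (elliptic_quadric a b c) s)
     (proj_points 1 :: (nat \<Rightarrow> 'b) set) (Bext0 emb q s)"
  unfolding perm_equiv_def using sig_bij perm_main by blast

end



context ell2 begin

definition ex :: "nat \<Rightarrow> nat \<times> nat \<Rightarrow> nat" where
  "ex s k = (case k of (i,j) \<Rightarrow> (s - i) + q * (s - j))"

lemma hmon_pt1: "hmon q s k (pt1 t) = t ^ ex s k"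
  by (cases k) (simp add: hmon_def ex_def pt1_def)

lemma hmon_pinf: "hmon q s k pinf = (if k = (0,0) then 1 else 0)"
  using q2 by (cases k) (auto simp: hmon_def pinf_def)

definition hpoly :: "nat \<Rightarrow> (nat \<times> nat \<Rightarrow> 'b) \<Rightarrow> 'b poly" where
  "hpoly s \<alpha> = (\<Sum>k\<in>{0..s}\<times>{0..s}. monom (\<alpha> k) (ex s k))"

lemma poly_hpoly: "poly (hpoly s \<alpha>) t = (\<Sum>k\<in>{0..s}\<times>{0..s}. \<alpha> k * hmon q s k (pt1 t))"
  by (simp add: hpoly_def poly_sum poly_monom hmon_pt1)

lemma coeff_hpoly: "coeff (hpoly s \<alpha>) n = (\<Sum>k\<in>{0..s}\<times>{0..s}. if ex s k = n then \<alpha> k else 0)"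
  by (simp add: hpoly_def coeff_sum coeff_monom)

lemma ex_le: "ex s k \<le> s + q * s"
proof -
  obtain i j where ij: "k = (i,j)" by (cases k)
  show ?thesis unfolding ex_def ij prod.case by (rule add_mono) simp_all
qed

lemma ex_top: "k \<in> {0..s}\<times>{0..s} \<Longrightarrow> ex s k = s + q * s \<longleftrightarrow> k = (0,0)"
proof -
  assume k: "k \<in> {0..s}\<times>{0..s}"
  obtain i j where ij: "k = (i,j)" by (cases k)
  have "(s - i) + q * (s - j) = s + q * s \<Longrightarrow> i = 0 \<and> j = 0"
  proof -
    assume h: "(s - i) + q * (s - j) = s + q * s"
    have a: "s - i \<le> s" by simp
    have b: "q * (s - j) \<le> q * s" by simp
    hence "s - i = s" "q * (s - j) = q * s" using h a b by linarith+
    thus ?thesis using k q2 ij by auto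
  qed
  thus ?thesis by (auto simp: ex_def ij)
qed

lemma coeff_hpoly_top: "coeff (hpoly s \<alpha>) (s + q * s) = \<alpha> (0,0)"
proof -
  have "coeff (hpoly s \<alpha>) (s + q * s) = (\<Sum>k\<in>{0..s}\<times>{0..s}. if k = (0,0) then \<alpha> k else 0)"
    unfolding coeff_hpoly by (intro sum.cong) (auto simp: ex_top)
  thus ?thesis by (simp add: sum.delta)
qed

lemma coeff_hpoly_big: "n > s + q * s \<Longrightarrow> coeff (hpoly s \<alpha>) n = 0"
proof -
  assume n: "n > s + q * s"
  have "ex s k \<noteq> n" for k using ex_le[of s k] n by linarith
  thus ?thesis unfolding coeff_hpoly by simp
qed

lemma coeff_hpoly_big0: "\<alpha> (0,0) = 0 \<Longrightarrow> n \<ge> s + q * s \<Longrightarrow> coeff (hpoly s \<alpha>) n = 0"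
proof -
  assume a: "\<alpha> (0,0) = 0" and n: "n \<ge> s + q * s"
  show ?thesis
  proof (cases "n = s + q * s")
    case True thus ?thesis using coeff_hpoly_top a by simp
  qed (use n coeff_hpoly_big in auto)
qed

lemma zero_bound:
  assumes h: "h \<in> HS.sp s" and nz: "\<exists>P\<in>proj_points 1. h P \<noteq> 0"
  shows "card {P\<in>proj_points 1. h P = 0} \<le> s * (q+1)"
proof -
  from h obtain \<alpha> where ha: "h = (\<lambda>P. \<Sum>k\<in>{0..s}\<times>{0..s}. \<alpha> k * hmon q s k P)" by (rule HS.spE)
  define p where "p = hpoly s \<alpha>"
  have hpt: "h (pt1 t) = poly p t" for t by (simp add: ha p_def poly_hpoly)
  have hinf: "h pinf = \<alpha> (0,0)"
  proof -
    have "h pinf = (\<Sum>k\<in>{0..s}\<times>{0..s}. if k = (0,0) then \<alpha> k else 0)"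
      unfolding ha by (intro sum.cong) (auto simp: hmon_pinf)
    thus ?thesis by (simp add: sum.delta)
  qed
  have sub: "{P\<in>proj_points 1. h P = 0} \<subseteq> pt1 ` {t. poly p t = 0} \<union> (if \<alpha> (0,0) = 0 then {pinf} else {})"
    using hpt hinf unfolding P1_char by auto
  have p0: "p \<noteq> 0"
  proof
    assume "p = 0"
    hence "h (pt1 t) = 0" for t using hpt by simp
    moreover have "\<alpha> (0,0) = 0" using \<open>p = 0\<close> coeff_hpoly_top[of s \<alpha>] by (simp add: p_def)
    ultimately show False using nz hinf unfolding P1_char by auto
  qed
  have fr: "finite {t. poly p t = 0}" using p0 by (rule poly_roots_finite)
  have cr: "card {t. poly p t = 0} \<le> degree p" using p0 by (rule card_poly_roots_bound)
  have ci: "card (pt1 ` {t. poly p t = 0}) \<le> card {t. poly p t = 0}" by (rule card_image_le[OF fr])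
  show ?thesis
  proof (cases "\<alpha> (0,0) = 0")
    case False
    have "degree p \<le> s + q * s" using coeff_hpoly_big unfolding p_def by (intro degree_le) auto
    moreover have "card {P\<in>proj_points 1. h P = 0} \<le> card (pt1 ` {t. poly p t = 0})"
      using sub False by (intro card_mono) (auto intro: fr)
    ultimately show ?thesis using cr ci by (simp add: algebra_simps)
  next
    case True
    have "degree p < s + q * s"
    proof (rule ccontr)
      assume "\<not> degree p < s + q * s"
      hence "coeff p (degree p) = 0" using coeff_hpoly_big0[where \<alpha>=\<alpha> and s=s, OF True] unfolding p_def by simp
      thus False using p0 by simp
    qed
    moreover have "card {P\<in>proj_points 1. h P = 0} \<le> card (pt1 ` {t. poly p t = 0} \<union> {pinf})"
      using sub True by (intro card_mono) (auto intro: fr)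
    moreover have "card (pt1 ` {t. poly p t = 0} \<union> {pinf}) \<le> card (pt1 ` {t. poly p t = 0}) + 1"
      by (rule card_Un_le[THEN order_trans]) simp
    ultimately show ?thesis using cr ci by (simp add: algebra_simps)
  qed
qed

end



context ell2 begin

lemma form_HS: "g \<in> (FS.sp s :: ((nat \<Rightarrow> 'a) \<Rightarrow> 'a) set) \<Longrightarrow> (\<lambda>P. emb (g (tau P))) \<in> HS.sp s"
proof -
  assume g: "g \<in> FS.sp s"
  from g obtain \<alpha> where ga: "g = (\<lambda>v. \<Sum>e\<in>monomials 3 s. \<alpha> e * fmon s e v)" by (rule FS.spE)
  have "(\<lambda>P. \<Sum>e\<in>monomials 3 s. emb (\<alpha> e) * fmon s e (XXv P)) \<in> HS.sp s"
    by (intro HS.sp_sum HS.sp_smult fmon_XX_HS)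
  moreover have "(\<lambda>P. emb (g (tau P))) = (\<lambda>P. \<Sum>e\<in>monomials 3 s. emb (\<alpha> e) * fmon s e (XXv P))"
    by (simp add: ga emb_sum emb_mult fmon_tau)
  ultimately show ?thesis by simp
qed

lemma weight_transfer:
  "card {e\<in>elliptic_quadric a b c. g e \<noteq> 0} = card {P\<in>proj_points 1. g (tau P) \<noteq> 0}"
proof -
  have "{e\<in>elliptic_quadric a b c. g e \<noteq> 0} = tau ` {P\<in>proj_points 1. g (tau P) \<noteq> 0}"
    using tau_bij unfolding bij_betw_def by auto
  moreover have "inj_on tau {P\<in>proj_points 1. g (tau P) \<noteq> 0}"
    using tau_inj by (rule inj_on_subset) auto
  ultimately show ?thesis by (simp add: card_image)
qed

lemma card_P1_b: "card (proj_points 1 :: (nat \<Rightarrow> 'b) set) = q ^ 2 + 1"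
  using card_P1[where 'b='b] Fq2 by simp

lemma finite_P1: "finite (proj_points 1 :: (nat \<Rightarrow> 'b) set)"
  unfolding P1_char by simp

lemma card_split: "card {P\<in>proj_points 1. f P \<noteq> (0::'z::zero)} = q ^ 2 + 1 - card {P\<in>(proj_points 1 :: (nat \<Rightarrow> 'b) set). f P = 0}"
proof -
  have "{P\<in>proj_points 1. f P \<noteq> 0} = proj_points 1 - {P\<in>(proj_points 1 :: (nat \<Rightarrow> 'b) set). f P = 0}" by auto
  thus ?thesis using finite_P1 card_P1_b by (simp add: card_Diff_subset)
qed

lemma hweight_res: "hweight X (res X g) = card {e\<in>X. g e \<noteq> 0}"
  unfolding hweight_def res_def by (intro arg_cong[where f=card]) auto

lemma weight_lower:
  assumes x: "x \<in> eval_code 3 (elliptic_quadric a b c) s" and nz: "x \<noteq> (\<lambda>_. 0)"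
  shows "hweight (elliptic_quadric a b c) x \<ge> q ^ 2 + 1 - s * (q + 1)"
proof -
  obtain g where xg: "x = res (elliptic_quadric a b c) g" and g: "g \<in> FS.sp s"
    using x unfolding eval_code_sp by blast
  define h where "h = (\<lambda>P. emb (g (tau P)))"
  have h: "h \<in> HS.sp s" unfolding h_def by (rule form_HS[OF g])
  obtain e where e: "e \<in> elliptic_quadric a b c" "g e \<noteq> 0"
    using nz unfolding xg res_def by (auto simp: fun_eq_iff split: if_splits)
  have "h (sig e) \<noteq> 0" "sig e \<in> proj_points 1" using sig_tau[OF e(1)] e(2) by (auto simp: h_def)
  hence "card {P\<in>proj_points 1. h P = 0} \<le> s * (q + 1)" using zero_bound[OF h] by blast
  moreover have "hweight (elliptic_quadric a b c) x = q ^ 2 + 1 - card {P\<in>proj_points 1. h P = 0}"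
  proof -
    have "{P\<in>proj_points 1. h P = 0} = {P\<in>proj_points 1. g (tau P) = 0}" by (simp add: h_def)
    thus ?thesis unfolding xg hweight_res weight_transfer by (simp add: card_split)
  qed
  ultimately show ?thesis by simp
qed

end



context ell2 begin

lemma tau_vals:
  "tau (pt1 t) 0 = 1" "emb (tau (pt1 t) 3) = t ^ q * t" "tau pinf 0 = 0" "tau pinf 3 = 1"
proof -
  show "tau (pt1 t) 0 = 1" using emb_tau[of "pt1 t" 0] by (simp add: XX_pt1 flip: emb_1)
  show "emb (tau (pt1 t) 3) = t ^ q * t" using emb_tau[of "pt1 t" 3] by (simp add: XX_pt1)
  show "tau pinf 0 = 0" using emb_tau[of pinf 0] by (simp add: XX_pinf)
  show "tau pinf 3 = 1" using emb_tau[of pinf 3] by (simp add: XX_pinf flip: emb_1)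
qed

lemma weight_attained:
  assumes sq: "s \<le> q - 1"
  shows "\<exists>x\<in>eval_code 3 (elliptic_quadric a b c) s. x \<noteq> (\<lambda>_. 0) \<and>
           hweight (elliptic_quadric a b c) x = q ^ 2 + 1 - s * (q + 1)"
proof -
  have "card {..<s} \<le> card (UNIV - {0::'a})" using sq card_range_emb
    by (simp add: card_Diff_singleton_if q_def)
  then obtain lam :: "nat \<Rightarrow> 'a" where lam: "lam ` {..<s} \<subseteq> UNIV - {0}" "inj_on lam {..<s}"
    using card_le_inj[of "{..<s}" "UNIV - {0::'a}"] by auto
  define g where "g = (\<lambda>v::nat \<Rightarrow> 'a. \<Prod>k\<in>{..<s}. (v 3 - lam k * v 0))"
  have lin: "(\<lambda>v::nat \<Rightarrow> 'a. v 3 - lam k * v 0) \<in> FS.sp 1" for k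
  proof -
    have "(\<lambda>v::nat \<Rightarrow> 'a. v 3 + (- lam k) * v 0) \<in> FS.sp 1"
      by (intro FS.sp_add FS.sp_smult FS_coord) auto
    thus ?thesis by simp
  qed
  have "g \<in> FS.sp (\<Sum>k\<in>{..<s}. 1)" unfolding g_def by (rule FS.sp_prod) (rule lin)
  hence gs: "g \<in> FS.sp s" by simp
  define Z where "Z = (\<Union>k\<in>{..<s}. {t::'b. t ^ q * t = emb (lam k)})"
  have Zeq: "{P\<in>proj_points 1. g (tau P) = 0} = pt1 ` Z"
  proof -
    have "g (tau (pt1 t)) = 0 \<longleftrightarrow> t \<in> Z" for t
    proof -
      have "g (tau (pt1 t)) = 0 \<longleftrightarrow> (\<exists>k\<in>{..<s}. tau (pt1 t) 3 = lam k)"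
        by (simp add: g_def tau_vals)
      also have "\<dots> \<longleftrightarrow> (\<exists>k\<in>{..<s}. emb (tau (pt1 t) 3) = emb (lam k))" by simp
      also have "\<dots> \<longleftrightarrow> t \<in> Z" by (simp add: Z_def tau_vals)
      finally show ?thesis .
    qed
    moreover have "g (tau pinf) \<noteq> 0" by (simp add: g_def tau_vals)
    ultimately show ?thesis unfolding P1_char by auto
  qed
  have cZ: "card Z = s * (q + 1)"
  proof -
    have "card Z = (\<Sum>k\<in>{..<s}. card {t::'b. t ^ q * t = emb (lam k)})"
      unfolding Z_def
    proof (rule card_UN_disjoint)
      show "\<forall>i\<in>{..<s}. \<forall>j\<in>{..<s}. i \<noteq> j \<longrightarrow> {t::'b. t ^ q * t = emb (lam i)} \<inter> {t. t ^ q * t = emb (lam j)} = {}"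
        using lam(2) by (auto simp: inj_on_def)
    qed auto
    also have "\<dots> = (\<Sum>k\<in>{..<s}. q + 1)"
      by (intro sum.cong refl norm_fiber) (use lam(1) in auto)
    finally show ?thesis by simp
  qed
  define x where "x = res (elliptic_quadric a b c) g"
  have xin: "x \<in> eval_code 3 (elliptic_quadric a b c) s" unfolding x_def eval_code_sp using gs by blast
  have "tau pinf \<in> elliptic_quadric a b c" using tau_in_E P1_char by blast
  moreover have "g (tau pinf) \<noteq> 0" by (simp add: g_def tau_vals)
  ultimately have xnz: "x \<noteq> (\<lambda>_. 0)" unfolding x_def res_def by (metis (full_types))
  have "hweight (elliptic_quadric a b c) x = q ^ 2 + 1 - card (pt1 ` Z)"
    unfolding x_def hweight_res weight_transfer card_split Zeq ..
  also have "card (pt1 ` Z) = card Z" by (rule card_image) (rule inj_on_subset[OF pt1_inj], simp)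
  finally show ?thesis using xin xnz cZ by auto
qed

lemma min_dist_main:
  assumes sq: "s \<le> q - 1"
  shows "min_dist (elliptic_quadric a b c) (eval_code 3 (elliptic_quadric a b c) s) = q ^ 2 + 1 - s * (q + 1)"
proof -
  define S where "S = {hweight (elliptic_quadric a b c) x | x. x \<in> eval_code 3 (elliptic_quadric a b c) s \<and> x \<noteq> (\<lambda>_. 0)}"
  have fE: "finite (elliptic_quadric a b c)"
    using tau_bij finite_P1 bij_betw_finite by blast
  have "S \<subseteq> {..card (elliptic_quadric a b c)}"
    unfolding S_def hweight_def using fE by (auto intro!: card_mono)
  hence fS: "finite S" by (rule finite_subset) simp
  have "Min S = q ^ 2 + 1 - s * (q + 1)"
  proof (rule Min_eqI[OF fS])
    show "\<And>y. y \<in> S \<Longrightarrow> q ^ 2 + 1 - s * (q + 1) \<le> y" unfolding S_def using weight_lower by blast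
    show "q ^ 2 + 1 - s * (q + 1) \<in> S" unfolding S_def using weight_attained[OF sq] by force
  qed
  thus ?thesis unfolding min_dist_def S_def .
qed

end



interpretation VS: vector_space "\<lambda>(k::'a::field) (f::'i \<Rightarrow> 'a) x. k * f x"
  by unfold_locales (simp_all add: fun_eq_iff algebra_simps)

lemma card_span_indep:
  fixes B :: "('i \<Rightarrow> 'a::{field,finite}) set"
  assumes fB: "finite B" and ind: "VS.independent B"
  shows "card (VS.span B) = card (UNIV :: 'a set) ^ card B"
proof -
  define L where "L = (\<lambda>u. \<Sum>v\<in>B. (\<lambda>x. u v * v x))"
  have sp: "VS.span B = range L" unfolding L_def by (rule VS.span_finite[OF fB])
  have "range L = L ` (B \<rightarrow>\<^sub>E UNIV)"
  proof
    show "range L \<subseteq> L ` (B \<rightarrow>\<^sub>E UNIV)"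
    proof
      fix y assume "y \<in> range L"
      then obtain u where y: "y = L u" by blast
      have "L (restrict u B) = L u" unfolding L_def by (intro sum.cong) auto
      moreover have "restrict u B \<in> B \<rightarrow>\<^sub>E UNIV" by simp
      ultimately show "y \<in> L ` (B \<rightarrow>\<^sub>E UNIV)" using y by (metis image_eqI)
    qed
  qed auto
  moreover have "inj_on L (B \<rightarrow>\<^sub>E UNIV)"
  proof (rule inj_onI)
    fix u u' assume u: "u \<in> B \<rightarrow>\<^sub>E UNIV" and u': "u' \<in> B \<rightarrow>\<^sub>E UNIV" and eq: "L u = L u'"
    have "(\<Sum>v\<in>B. (\<lambda>x. (u v - u' v) * v x)) = (\<Sum>v\<in>B. (\<lambda>x. u v * v x) - (\<lambda>x. u' v * v x))"
      by (intro sum.cong) (auto simp: fun_eq_iff algebra_simps)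
    also have "\<dots> = L u - L u'" unfolding L_def by (simp add: sum_subtractf)
    also have "\<dots> = 0" using eq by simp
    finally have z: "(\<Sum>v\<in>B. (\<lambda>x. (u v - u' v) * v x)) = 0" .
    have "\<forall>v\<in>B. u v - u' v = 0"
      using VS.independentD[OF ind fB subset_refl, of "\<lambda>v. u v - u' v"] z by blast
    thus "u = u'" using u u' by (intro PiE_ext) auto
  qed
  ultimately have "card (VS.span B) = card (B \<rightarrow>\<^sub>E (UNIV :: 'a set))"
    using sp by (simp add: card_image)
  also have "\<dots> = card (UNIV :: 'a set) ^ card B" using fB by (simp add: card_PiE)
  finally show ?thesis .
qed

lemma card_dim:
  fixes V :: "('i \<Rightarrow> 'a::{field,finite}) set"
  assumes fV: "finite V" and sV: "VS.subspace V"
  shows "card V = card (UNIV :: 'a set) ^ VS.dim V"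
proof -
  obtain B where B: "B \<subseteq> V" "VS.independent B" "V \<subseteq> VS.span B" "card B = VS.dim V"
    using VS.basis_exists by blast
  have "VS.span B \<subseteq> V" using B(1) sV by (rule VS.span_minimal)
  hence "V = VS.span B" using B(3) by blast
  moreover have fB: "finite B" using B(1) fV by (rule finite_subset)
  ultimately show ?thesis using card_span_indep[OF fB B(2)] B(4) by simp
qed

lemma finite_supp_funs:
  assumes "finite X"
  shows "finite {x :: 'i \<Rightarrow> 'a::{finite,zero}. \<forall>e. e \<notin> X \<longrightarrow> x e = 0}"
proof -
  have "{x :: 'i \<Rightarrow> 'a. \<forall>e. e \<notin> X \<longrightarrow> x e = 0} \<subseteq> (\<lambda>f e. if e \<in> X then f e else 0) ` (X \<rightarrow>\<^sub>E UNIV)"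
  proof
    fix x :: "'i \<Rightarrow> 'a" assume x: "x \<in> {x. \<forall>e. e \<notin> X \<longrightarrow> x e = 0}"
    show "x \<in> (\<lambda>f e. if e \<in> X then f e else 0) ` (X \<rightarrow>\<^sub>E UNIV)"
      by (rule image_eqI[of _ _ "restrict x X"]) (use x in \<open>auto simp: fun_eq_iff\<close>)
  qed
  moreover have "finite ((\<lambda>f e. if e \<in> X then f e else (0::'a)) ` (X \<rightarrow>\<^sub>E (UNIV :: 'a set)))"
    using assms by (intro finite_imageI finite_PiE) auto
  ultimately show ?thesis by (rule finite_subset)
qed

lemma eval_code_subspace: "VS.subspace (eval_code 3 X s :: ((nat \<Rightarrow> 'a::field) \<Rightarrow> 'a) set)"
proof (rule VS.subspaceI)
  show "0 \<in> eval_code 3 X s" unfolding eval_code_sp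
    by (rule CollectI, rule exI[of _ "\<lambda>_. 0"]) (auto simp: res_def fun_eq_iff FS.sp_zero)
next
  fix x y assume "x \<in> eval_code 3 X s" "y \<in> eval_code 3 X s"
  then obtain g h where "x = res X g" "g \<in> FS.sp s" "y = res X h" "h \<in> FS.sp s"
    unfolding eval_code_sp by blast
  thus "x + y \<in> eval_code 3 X s" unfolding eval_code_sp
    by (intro CollectI exI[of _ "\<lambda>v. g v + h v"]) (auto simp: res_def fun_eq_iff FS.sp_add)
next
  fix c :: 'a and x assume "x \<in> eval_code 3 X s"
  then obtain g where "x = res X g" "g \<in> FS.sp s" unfolding eval_code_sp by blast
  thus "(\<lambda>xa. c * x xa) \<in> eval_code 3 X s" unfolding eval_code_sp
    by (intro CollectI exI[of _ "\<lambda>v. c * g v"]) (auto simp: res_def fun_eq_iff FS.sp_smult)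
qed

lemma eval_code_finite:
  "finite X \<Longrightarrow> finite (eval_code 3 X s :: ((nat \<Rightarrow> 'a::{field,finite}) \<Rightarrow> 'a) set)"
  by (rule finite_subset[OF _ finite_supp_funs[of X]]) (auto simp: eval_code_def res_def)

context ell2 begin

lemma card_eval_Bext0: "card (eval_code 3 (elliptic_quadric a b c) s) = card (Bext0 emb q s)"
proof -
  have "inj_on (\<lambda>d. res (elliptic_quadric a b c) (d \<circ> sig)) (Bext0 emb q s)"
  proof (rule inj_onI)
    fix d d' assume d: "d \<in> Bext0 emb q s" and d': "d' \<in> Bext0 emb q s"
      and eq: "res (elliptic_quadric a b c) (d \<circ> sig) = res (elliptic_quadric a b c) (d' \<circ> sig)"
    show "d = d'"
    proof
      fix P
      show "d P = d' P"
      proof (cases "P \<in> proj_points 1")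
        case True
        hence "tau P \<in> elliptic_quadric a b c" by (rule tau_in_E)
        moreover have "sig (tau P) = P" unfolding sig_def using True tau_inj by simp
        ultimately show ?thesis using fun_cong[OF eq, of "tau P"] by (simp add: res_def)
      next
        case False thus ?thesis using d d' by (simp add: Bext0_def)
      qed
    qed
  qed
  thus ?thesis unfolding perm_main by (rule card_image)
qed

end



context ell2 begin

abbreviation II :: "nat \<Rightarrow> (nat \<times> nat) set" where "II s \<equiv> {0..s}\<times>{0..s}"

definition hs :: "nat \<Rightarrow> (nat \<times> nat \<Rightarrow> 'b) \<Rightarrow> (nat \<Rightarrow> 'b) \<Rightarrow> 'b" where
  "hs s \<alpha> = (\<lambda>P. \<Sum>k\<in>II s. \<alpha> k * hmon q s k P)"

lemma ex_inj:
  assumes sq: "s < q" and k: "k \<in> II s" and k': "k' \<in> II s" and e: "ex s k = ex s k'"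
  shows "k = k'"
proof -
  obtain i j where ij: "k = (i,j)" by (cases k)
  obtain i' j' where ij': "k' = (i',j')" by (cases k')
  have e': "(s - i) + q * (s - j) = (s - i') + q * (s - j')" using e by (simp add: ex_def ij ij')
  have lt: "s - i < q" "s - i' < q" using sq by auto
  have "((s - i) + q * (s - j)) mod q = s - i" using lt by simp
  moreover have "((s - i') + q * (s - j')) mod q = s - i'" using lt by simp
  ultimately have a: "s - i = s - i'" using e' by simp
  have "((s - i) + q * (s - j)) div q = s - j" using lt q2 by simp
  moreover have "((s - i') + q * (s - j')) div q = s - j'" using lt q2 by simp
  ultimately have b: "s - j = s - j'" using e' by simp
  show ?thesis using a b k k' ij ij' by auto
qed

lemma uniq:
  assumes sq: "s + 2 \<le> q" and z: "\<And>t. hs s \<beta> (pt1 t) = 0"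
  shows "k \<in> II s \<Longrightarrow> \<beta> k = 0"
proof -
  assume k: "k \<in> II s"
  define p where "p = hpoly s \<beta>"
  have pz: "poly p t = 0" for t using z[of t] by (simp add: p_def poly_hpoly hs_def)
  have "p = 0"
  proof (rule ccontr)
    assume p0: "p \<noteq> 0"
    have "degree p \<le> s + q * s" using coeff_hpoly_big unfolding p_def by (intro degree_le) auto
    moreover have "card {t. poly p t = 0} \<le> degree p" using p0 by (rule card_poly_roots_bound)
    moreover have "{t. poly p t = 0} = UNIV" using pz by auto
    moreover have "s + q * s < q ^ 2"
    proof -
      have "s + q * s = (q + 1) * s" by (simp add: algebra_simps)
      also have "\<dots> \<le> (q + 1) * (q - 2)" using sq by (intro mult_left_mono) auto
      also have "\<dots> < q * q" using q2 by (cases q) (auto simp: algebra_simps)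
      finally show ?thesis by (simp add: power2_eq_square)
    qed
    ultimately show False using Fq2 by simp
  qed
  hence "coeff p (ex s k) = 0" by simp
  moreover have "coeff p (ex s k) = \<beta> k"
  proof -
    have "coeff p (ex s k) = (\<Sum>k'\<in>II s. if k' = k then \<beta> k' else 0)"
      unfolding p_def coeff_hpoly using ex_inj[of s _ k] k sq by (intro sum.cong) auto
    thus ?thesis using k by (simp add: sum.delta)
  qed
  ultimately show "\<beta> k = 0" by simp
qed

lemma pow_qq: "(x::'b) ^ (q * (i + q * j)) = x ^ (j + q * i)"
proof -
  have e: "q * (i + q * j) = q * i + (q * q) * j" by (simp add: algebra_simps)
  have "x ^ (q * (i + q * j)) = x ^ (q * i) * (x ^ (q * q)) ^ j"
    by (simp only: e power_add power_mult)
  also have "(x ^ (q * q)) = x" using powq2[of x] by (simp add: power2_eq_square)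
  finally show ?thesis by (simp add: power_add algebra_simps)
qed

lemma hmon_frob: "k \<in> II s \<Longrightarrow> hmon q s k (P :: nat \<Rightarrow> 'b) ^ q = hmon q s (prod.swap k) P"
proof -
  assume k: "k \<in> II s"
  obtain i j where ij: "k = (i,j)" by (cases k)
  have "hmon q s k P ^ q = P 0 ^ (q * (i + q * j)) * P 1 ^ (q * ((s - i) + q * (s - j)))"
    by (simp add: hmon_def ij power_mult_distrib power_mult[symmetric] mult.commute)
  also have "\<dots> = P 0 ^ (j + q * i) * P 1 ^ ((s - j) + q * (s - i))"
    using pow_qq[of "P 0" i j] pow_qq[of "P 1" "s - i" "s - j"] by simp
  finally show ?thesis by (simp add: hmon_def ij)
qed

lemma hs_frob: "hs s \<alpha> P ^ q = hs s (\<lambda>k. \<alpha> (prod.swap k) ^ q) P"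
proof -
  have "hs s \<alpha> P ^ q = (\<Sum>k\<in>II s. \<alpha> k ^ q * hmon q s (prod.swap k) P)"
    unfolding hs_def frob_sum by (intro sum.cong) (auto simp: frob_mult hmon_frob)
  also have "\<dots> = (\<Sum>k\<in>II s. \<alpha> (prod.swap k) ^ q * hmon q s k P)"
    by (rule sum.reindex_bij_witness[of _ prod.swap prod.swap]) auto
  finally show ?thesis by (simp add: hs_def)
qed

definition herm :: "nat \<Rightarrow> (nat \<times> nat \<Rightarrow> 'b) \<Rightarrow> bool" where
  "herm s \<alpha> \<longleftrightarrow> (\<forall>k\<in>II s. \<alpha> (prod.swap k) = \<alpha> k ^ q)"

lemma herm_fixed: "herm s \<alpha> \<Longrightarrow> hs s \<alpha> P ^ q = hs s \<alpha> P"
proof -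
  assume h: "herm s \<alpha>"
  have "hs s \<alpha> P ^ q = hs s (\<lambda>k. \<alpha> (prod.swap k) ^ q) P" by (rule hs_frob)
  also have "\<dots> = hs s \<alpha> P"
  proof -
    have "\<alpha> (prod.swap k) ^ q = \<alpha> k" if "k \<in> II s" for k
    proof -
      have "prod.swap k \<in> II s" using that by auto
      hence "\<alpha> (prod.swap (prod.swap k)) = \<alpha> (prod.swap k) ^ q"
        by (rule bspec[OF h[unfolded herm_def]])
      thus ?thesis by simp
    qed
    thus ?thesis unfolding hs_def by (intro sum.cong) auto
  qed
  finally show ?thesis .
qed

lemma fixed_herm:
  assumes sq: "s + 2 \<le> q" and fx: "\<And>t. hs s \<alpha> (pt1 t) ^ q = hs s \<alpha> (pt1 t)"
  shows "herm s \<alpha>"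
proof -
  have "hs s (\<lambda>k. \<alpha> k - \<alpha> (prod.swap k) ^ q) (pt1 t) = 0" for t
  proof -
    have "hs s (\<lambda>k. \<alpha> k - \<alpha> (prod.swap k) ^ q) (pt1 t) = hs s \<alpha> (pt1 t) - hs s (\<lambda>k. \<alpha> (prod.swap k) ^ q) (pt1 t)"
      unfolding hs_def by (simp add: sum_subtractf algebra_simps)
    also have "\<dots> = 0" using fx[of t] hs_frob[of s \<alpha> "pt1 t"] by simp
    finally show ?thesis .
  qed
  hence "\<And>k. k \<in> II s \<Longrightarrow> \<alpha> k - \<alpha> (prod.swap k) ^ q = 0" using uniq[OF sq] by blast
  hence e: "\<And>k. k \<in> II s \<Longrightarrow> \<alpha> k = \<alpha> (prod.swap k) ^ q" by simp
  show ?thesis unfolding herm_def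
  proof
    fix k assume "k \<in> II s"
    hence "prod.swap k \<in> II s" by auto
    thus "\<alpha> (prod.swap k) = \<alpha> k ^ q" using e[of "prod.swap k"] by simp
  qed
qed

end



context ell2 begin

lemma dec_uniq:
  assumes "emb x + emb y * \<theta> = emb x' + emb y' * \<theta>" shows "x = x' \<and> y = y'"
proof (cases "y = y'")
  case True thus ?thesis using assms by simp
next
  case False
  have "emb (y' - y) * \<theta> = emb (x - x')" using assms by (simp add: emb_diff algebra_simps)
  hence "\<theta> = emb ((x - x') / (y' - y))" using False by (simp add: emb_divide field_simps)
  thus ?thesis using theta_notF by blast
qed

lemma dec_exists: "\<exists>x y. z = emb x + emb y * \<theta>"
proof -
  define f where "f = (\<lambda>(x, y). emb x + emb y * \<theta>)"
  have "inj f" unfolding f_def by (rule injI) (auto dest: dec_uniq)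
  hence "card (range f) = card (UNIV :: ('a \<times> 'a) set)" by (simp add: card_image)
  also have "\<dots> = q * q" by (simp add: card_cartesian_product q_def flip: UNIV_Times_UNIV)
  also have "\<dots> = card (UNIV :: 'b set)" using Fq2 by (simp add: power2_eq_square)
  finally have "range f = UNIV" by (intro card_subset_eq) auto
  hence "z \<in> range f" by simp
  thus ?thesis unfolding f_def by auto
qed

definition dec1 :: "'b \<Rightarrow> 'a" where "dec1 z = (SOME x. \<exists>y. z = emb x + emb y * \<theta>)"
definition dec2 :: "'b \<Rightarrow> 'a" where "dec2 z = (SOME y. z = emb (dec1 z) + emb y * \<theta>)"

lemma dec_eq: "z = emb (dec1 z) + emb (dec2 z) * \<theta>"
proof -
  have "\<exists>y. z = emb (dec1 z) + emb y * \<theta>" unfolding dec1_def by (rule someI_ex) (rule dec_exists)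
  thus ?thesis unfolding dec2_def by (rule someI_ex)
qed

definition kap :: "(nat \<times> nat \<Rightarrow> 'a) \<Rightarrow> nat \<times> nat \<Rightarrow> 'b" where
  "kap \<beta> k = (case k of (i, j) \<Rightarrow>
     if i = j then emb (\<beta> (i, i))
     else if i < j then emb (\<beta> (i, j)) + emb (\<beta> (j, i)) * \<theta>
     else (emb (\<beta> (j, i)) + emb (\<beta> (i, j)) * \<theta>) ^ q)"

lemma kap_herm: "herm s (kap \<beta>)"
  unfolding herm_def
proof
  fix k :: "nat \<times> nat"
  obtain i j where ij: "k = (i,j)" by (cases k)
  show "kap \<beta> (prod.swap k) = kap \<beta> k ^ q"
    by (cases i j rule: linorder_cases) (auto simp: kap_def ij emb_powq powqq)
qed

definition Psi :: "nat \<Rightarrow> (nat \<times> nat \<Rightarrow> 'a) \<Rightarrow> (nat \<Rightarrow> 'b) \<Rightarrow> 'a" where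
  "Psi s \<beta> = res (proj_points 1) (\<lambda>P. inv emb (hs s (kap \<beta>) P))"

lemma emb_Psi: "P \<in> proj_points 1 \<Longrightarrow> emb (Psi s \<beta> P) = hs s (kap \<beta>) P"
  unfolding Psi_def res_def using herm_fixed[OF kap_herm] by (simp add: fixedI)

lemma Psi_in: "Psi s \<beta> \<in> Bext0 emb q s"
proof -
  have "emb \<circ> Psi s \<beta> = res (proj_points 1) (hs s (kap \<beta>))"
    by (auto simp: fun_eq_iff res_def emb_Psi) (simp add: Psi_def res_def)
  moreover have "hs s (kap \<beta>) \<in> HS.sp s" unfolding hs_def by (rule HS.spI) simp
  ultimately have "emb \<circ> Psi s \<beta> \<in> Bext q s" unfolding Bext_sp by blast
  thus ?thesis unfolding Bext0_def by (auto simp: Psi_def res_def)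
qed

lemma Psi_inj:
  assumes sq: "s + 2 \<le> q"
  shows "inj_on (Psi s) (II s \<rightarrow>\<^sub>E UNIV)"
proof (rule inj_onI)
  fix \<beta> \<beta>' assume b: "\<beta> \<in> II s \<rightarrow>\<^sub>E UNIV" and b': "\<beta>' \<in> II s \<rightarrow>\<^sub>E UNIV" and eq: "Psi s \<beta> = Psi s \<beta>'"
  have "hs s (\<lambda>k. kap \<beta> k - kap \<beta>' k) (pt1 t) = 0" for t
  proof -
    have P: "pt1 t \<in> proj_points 1" using P1_char by blast
    have "hs s (\<lambda>k. kap \<beta> k - kap \<beta>' k) (pt1 t) = hs s (kap \<beta>) (pt1 t) - hs s (kap \<beta>') (pt1 t)"
      unfolding hs_def by (simp add: sum_subtractf algebra_simps)
    also have "\<dots> = 0" using emb_Psi[OF P, of s \<beta>] emb_Psi[OF P, of s \<beta>'] eq by simp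
    finally show ?thesis .
  qed
  hence kz: "k \<in> II s \<Longrightarrow> kap \<beta> k = kap \<beta>' k" for k using uniq[OF sq] by fastforce
  show "\<beta> = \<beta>'"
  proof (rule PiE_ext[OF b b'])
    fix k assume k: "k \<in> II s"
    obtain i j where ij: "k = (i,j)" by (cases k)
    show "\<beta> k = \<beta>' k"
    proof (cases i j rule: linorder_cases)
      case equal
      thus ?thesis using kz[OF k] by (simp add: kap_def ij)
    next
      case less
      hence "emb (\<beta> (i,j)) + emb (\<beta> (j,i)) * \<theta> = emb (\<beta>' (i,j)) + emb (\<beta>' (j,i)) * \<theta>"
        using kz[OF k] by (simp add: kap_def ij)
      thus ?thesis using dec_uniq ij by blast
    next
      case greater
      have k': "(j,i) \<in> II s" using k ij by auto
      hence "emb (\<beta> (j,i)) + emb (\<beta> (i,j)) * \<theta> = emb (\<beta>' (j,i)) + emb (\<beta>' (i,j)) * \<theta>"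
        using kz[OF k'] greater by (simp add: kap_def)
      thus ?thesis using dec_uniq ij by blast
    qed
  qed
qed

lemma Psi_surj:
  assumes sq: "s + 2 \<le> q"
  shows "Bext0 emb q s \<subseteq> Psi s ` (II s \<rightarrow>\<^sub>E UNIV)"
proof
  fix cw assume cw: "cw \<in> Bext0 emb q s"
  from cw have "emb \<circ> cw \<in> Bext q s" and z: "\<And>P. P \<notin> proj_points 1 \<Longrightarrow> cw P = 0"
    unfolding Bext0_def by auto
  then obtain h where hc: "emb \<circ> cw = res (proj_points 1) h" and h: "h \<in> HS.sp s"
    unfolding Bext_sp by blast
  from h obtain \<alpha> where ha: "h = hs s \<alpha>" unfolding hs_def by (rule HS.spE)
  have hP: "P \<in> proj_points 1 \<Longrightarrow> hs s \<alpha> P = emb (cw P)" for P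
    using fun_cong[OF hc, of P] by (simp add: res_def ha)
  have "herm s \<alpha>"
  proof (rule fixed_herm[OF sq])
    fix t :: 'b
    have "pt1 t \<in> proj_points 1" using P1_char by blast
    thus "hs s \<alpha> (pt1 t) ^ q = hs s \<alpha> (pt1 t)" using hP emb_powq by simp
  qed
  hence hm: "k \<in> II s \<Longrightarrow> \<alpha> (prod.swap k) = \<alpha> k ^ q" for k unfolding herm_def by blast
  define \<beta> where "\<beta> = restrict (\<lambda>(i,j). if i = j then inv emb (\<alpha> (i,i))
      else if i < j then dec1 (\<alpha> (i,j)) else dec2 (\<alpha> (j,i))) (II s)"
  have bP: "\<beta> \<in> II s \<rightarrow>\<^sub>E UNIV" unfolding \<beta>_def by simp
  have ka: "kap \<beta> k = \<alpha> k" if k: "k \<in> II s" for k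
  proof -
    obtain i j where ij: "k = (i,j)" by (cases k)
    have k': "(j,i) \<in> II s" using k ij by auto
    show ?thesis
    proof (cases i j rule: linorder_cases)
      case equal
      have "\<alpha> (i,i) ^ q = \<alpha> (i,i)" using hm[OF k] ij equal by simp
      thus ?thesis using k ij equal by (simp add: kap_def \<beta>_def fixedI)
    next
      case less
      thus ?thesis using k k' ij dec_eq[of "\<alpha> (i,j)"] by (simp add: kap_def \<beta>_def)
    next
      case greater
      have "kap \<beta> k = (emb (dec1 (\<alpha> (j,i))) + emb (dec2 (\<alpha> (j,i))) * \<theta>) ^ q"
        using k k' ij greater by (simp add: kap_def \<beta>_def)
      also have "\<dots> = \<alpha> (j,i) ^ q" using dec_eq[of "\<alpha> (j,i)"] by simp
      also have "\<dots> = \<alpha> k" using hm[OF k'] ij by simp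
      finally show ?thesis .
    qed
  qed
  have "Psi s \<beta> = cw"
  proof
    fix P show "Psi s \<beta> P = cw P"
    proof (cases "P \<in> proj_points 1")
      case True
      have "emb (Psi s \<beta> P) = hs s (kap \<beta>) P" by (rule emb_Psi[OF True])
      also have "\<dots> = hs s \<alpha> P" unfolding hs_def using ka by (intro sum.cong) auto
      also have "\<dots> = emb (cw P)" by (rule hP[OF True])
      finally show ?thesis by simp
    next
      case False thus ?thesis using z by (simp add: Psi_def res_def)
    qed
  qed
  thus "cw \<in> Psi s ` (II s \<rightarrow>\<^sub>E UNIV)" using bP by blast
qed

lemma card_Bext0:
  assumes sq: "s + 2 \<le> q"
  shows "card (Bext0 emb q s) = q ^ ((s + 1) ^ 2)"
proof -
  have "Bext0 emb q s = Psi s ` (II s \<rightarrow>\<^sub>E UNIV)" using Psi_surj[OF sq] Psi_in by blast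
  hence "card (Bext0 emb q s) = card (II s \<rightarrow>\<^sub>E (UNIV :: 'a set))"
    using Psi_inj[OF sq] by (simp add: card_image)
  also have "\<dots> = q ^ card (II s)" by (simp add: card_PiE q_def)
  also have "card (II s) = (s + 1) ^ 2" by (simp add: card_cartesian_product power2_eq_square algebra_simps)
  finally show ?thesis .
qed

lemma code_dim_main:
  assumes sq: "s + 2 \<le> q"
  shows "code_dim (eval_code 3 (elliptic_quadric a b c) s) = (s + 1) ^ 2"
proof -
  have fE: "finite (elliptic_quadric a b c)" using tau_bij finite_P1 bij_betw_finite by blast
  have "card (eval_code 3 (elliptic_quadric a b c) s) = q ^ VS.dim (eval_code 3 (elliptic_quadric a b c) s)"
    unfolding q_def by (rule card_dim[OF eval_code_finite[OF fE] eval_code_subspace])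
  moreover have "card (eval_code 3 (elliptic_quadric a b c) s) = q ^ ((s + 1) ^ 2)"
    using card_eval_Bext0 card_Bext0[OF sq] by simp
  ultimately have "VS.dim (eval_code 3 (elliptic_quadric a b c) s) = (s + 1) ^ 2"
    using q2 by simp
  thus ?thesis unfolding code_dim_def .
qed

end


theorem theorem3p6:
  fixes a b c :: "'a::{field,finite}"
    and emb :: "'a \<Rightarrow> 'b::{field,finite}"
    and s :: nat
  defines "q \<equiv> card (UNIV :: 'a set)"
  assumes Qirr: "irreducible (qform_poly a b c)"
    and Fq2: "card (UNIV :: 'b set) = q ^ 2"
    and emb_hom: "\<And>x y. emb (x + y) = emb x + emb y" "\<And>x y. emb (x * y) = emb x * emb y"
      "emb 1 = 1"
    and s_bound: "s < q - 1"
  shows "perm_equiv (elliptic_quadric a b c) (eval_code 3 (elliptic_quadric a b c) s)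
                    (proj_points 1 :: (nat \<Rightarrow> 'b) set) (Bext0 emb q s)
       \<and> card (elliptic_quadric a b c) = q ^ 2 + 1
       \<and> code_dim (eval_code 3 (elliptic_quadric a b c) s) = (s + 1) ^ 2
       \<and> min_dist (elliptic_quadric a b c) (eval_code 3 (elliptic_quadric a b c) s)
           = q ^ 2 + 1 - s * (q + 1)"
proof -
  interpret E: ell a b c emb q
    by unfold_locales (use Qirr Fq2 emb_hom in \<open>simp_all add: q_def\<close>)
  obtain \<theta> where th: "emb a * \<theta> * \<theta> + emb b * \<theta> + emb c = 0" "\<theta> \<notin> range emb"
    using E.exists_theta by blast
  obtain \<rho> where rh: "\<rho> ^ q * \<rho> = emb a" using E.exists_rho by blast
  interpret E2: ell2 a b c emb q \<theta> \<rho>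
    by unfold_locales (use th rh in auto)
  have s2: "s + 2 \<le> q" and s1: "s \<le> q - 1" using s_bound by auto
  show ?thesis
    using E2.perm_equiv_main E2.card_E E2.code_dim_main[OF s2] E2.min_dist_main[OF s1] by blast
qed


end
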